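(* Let $g\in T$ be represented by a pair of finite rooted binary trees $(T_-,T_+)$ with $n$ leaves each and a shift $k\in\{0,\dots,n-1\}$, so that $g$ maps the $i$-th leaf interval of $T_-$ affinely onto the $\sigma(i)$-th leaf interval of $T_+$, where $\sigma(i)\equiv i+k \pmod n$, $\sigma(i)\in\{1,\dots,n\}$. Form the doubly labelled closed strand diagram of $g$ as in the context, and apply doubly labelled Rule I repeatedly, in any order, until no edge goes from a merge vertex to a split vertex. Then the final diagram contains an oriented cycle, and for any oriented cycle in it, if $a$ is the sum of the blue labels and $b$ the sum of the red labels along the cycle, then $b\ge1$ and the rotation number of $g$ is $\operatorname{rot}(g)=\frac ab \bmod \mathbb Z$.
   Context: Thompson's group $T$ is the group of orientation-preserving homeomorphisms of the circle $\mathbb S=[0,1]/(0\sim1)$ that are piecewise affine with slopes powers of $2$ and finitely many breakpoints at dyadic rationals. A finite rooted binary tree with $n$ leaves (ordered left to right) determines a subdivision of $[0,1]$ into $n$ standard dyadic intervals (the root is $[0,1]$, and a node $[p,q]$ has children $[p,\frac{p+q}2]$ and $[\frac{p+q}2,q]$). For $g\in\mathrm{Homeo}^+(\mathbb S)$ with lift $\hat g\in\mathrm{Homeo}^+(\mathbb R)$, $\operatorname{rot}(g)=\lim_{i\to\infty}\hat g^i(x)/i \bmod\mathbb Z$. Doubly labelled closed strand diagram: a directed graph whose $n-1$ split vertices are the internal nodes of $T_-$ (one incoming edge, two outgoing edges ordered left/right, directed root-to-leaves) and whose $n-1$ merge vertices are the internal nodes of $T_+$ (two incoming edges ordered left/right,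 one outgoing edge, directed leaves-to-root); the $i$-th leaf of $T_-$ is joined to the $\sigma(i)$-th leaf of $T_+$, and the root of $T_+$ is joined to the root of $T_-$, erasing bivalent points so these become single edges. Each edge carries two nonnegative integer labels, red and blue. Red labels: $1$ on the edge through the glued roots, $0$ elsewhere. Blue labels: $1$ on the edge through the junction of leaf $i$ of $T_-$ with leaf $\sigma(i)$ of $T_+$ whenever $i+k>n$ (i.e. the connection wraps around the circle), $0$ elsewhere; if an edge contains several such junctions or the root junction, its labels are the corresponding sums. Doubly labelled Rule I: if an edge $e$ goes from a merge vertex $m$ (incoming edges $x_1$ left, $x_2$ right) to a split vertex $s$ (outgoing edges $z_1$ left, $z_2$ right), delete $m,s,e$ and for $i=1,2$ join strand $x_i$ to strand $z_i$ through $e$; each resulting edge gets, for each colour separately, as label the sum with multiplicity of the labels of the old edge-pieces composing it (e.g. $x_1+y+z_1$ and $x_2+y+z_2$ if the four edges are distinct, $x_1+x_2+2y+z_2$ if $x_2=z_1$). Strands closing up on themselves become vertex-free closed loops labelled by the sums along them (a closed loop counts as an oriented cycle). *)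

theory Defs
  imports Complex_Main
begin

datatype tree = Leaf | Node tree tree

fun nleaves :: "tree \<Rightarrow> nat" where
  "nleaves Leaf = 1"
| "nleaves (Node l r) = nleaves l + nleaves r"

fun leafints :: "tree \<Rightarrow> real \<Rightarrow> real \<Rightarrow> (real \<times> real) list" where
  "leafints Leaf p q = [(p, q)]"
| "leafints (Node l r) p q = leafints l p ((p + q) / 2) @ leafints r ((p + q) / 2) q"

text \<open>Node addresses: False = left child, True = right child; [] is the root.\<close>
fun nodes :: "tree \<Rightarrow> bool list set" where
  "nodes Leaf = {[]}"
| "nodes (Node l r) = {[]} \<union> Cons False ` nodes l \<union> Cons True ` nodes r"

fun leafaddrs :: "tree \<Rightarrow> bool list list" where
  "leafaddrs Leaf = [[]]"
| "leafaddrs (Node l r) = map (Cons False) (leafaddrs l) @ map (Cons True) (leafaddrs r)"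

definition sigma :: "nat \<Rightarrow> nat \<Rightarrow> nat \<Rightarrow> nat" where
  "sigma n k i = (i + k - 1) mod n + 1"

text \<open>The lift to the real line of the element g of T given by (T_-, T_+, k):
  on [0,1) the (0-based) j-th leaf interval of T_- is mapped affinely onto the
  sigma-th leaf interval of T_+, plus 1 when the connection wraps around (j+1+k > n);
  the lift commutes with integer translations.\<close>
definition glift :: "tree \<Rightarrow> tree \<Rightarrow> nat \<Rightarrow> real \<Rightarrow> real" where
  "glift Tm Tp k x =
     (let n = nleaves Tm; I = leafints Tm 0 1; J = leafints Tp 0 1; y = frac x;
          j = (LEAST j. y < snd (I ! j)); s = (j + k) mod n
      in of_int \<lfloor>x\<rfloor> + fst (J ! s)
         + (y - fst (I ! j)) * (snd (J ! s) - fst (J ! s)) / (snd (I ! j) - fst (I ! j))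
         + (if n < j + 1 + k then 1 else 0))"

definition rot_number :: "(real \<Rightarrow> real) \<Rightarrow> real" where
  "rot_number f = frac (lim (\<lambda>i. (f ^^ i) 0 / real i))"

text \<open>Diagrams are represented with explicit bivalent "Pass" vertices: a strand of the
  diagram (an edge after erasing bivalent points) is a path through Pass vertices, and its
  labels are the sums of the labels of its pieces. Ports: a Split vertex has out-ports 0
  (left) and 1 (right), a Merge vertex has in-ports 0 (left) and 1 (right); all other ports
  are 0.\<close>

datatype vkind = Split | Merge | Pass

datatype vid = VM "bool list" | VP "bool list" | VF nat
datatype eid = EM "bool list" | EP "bool list" | EJ nat | ER | EF nat

record sd =
  sd_verts :: "vid set"
  sd_kind :: "vid \<Rightarrow> vkind"
  sd_edges :: "eid set"
  sd_tail :: "eid \<Rightarrow> vid \<times> nat"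
  sd_head :: "eid \<Rightarrow> vid \<times> nat"
  sd_red :: "eid \<Rightarrow> nat"
  sd_blue :: "eid \<Rightarrow> nat"

definition port :: "bool \<Rightarrow> nat" where
  "port b = (if b then 1 else 0)"

text \<open>The doubly labelled closed strand diagram of (T_-, T_+, k): vertices are the nodes of
  T_- (internal: split, leaves: bivalent) and of T_+ (internal: merge, leaves: bivalent);
  edges are the tree edges, the junction edges leaf i of T_- to leaf sigma(i) of T_+
  (blue label 1 iff i+k > n), and the root edge from the root of T_+ to the root of T_-
  (red label 1).\<close>
definition init_sd :: "tree \<Rightarrow> tree \<Rightarrow> nat \<Rightarrow> sd" where
  "init_sd Tm Tp k = (let n = nleaves Tm in
    \<lparr> sd_verts = VM ` nodes Tm \<union> VP ` nodes Tp,
      sd_kind = (\<lambda>v. case v of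
                   VM w \<Rightarrow> (if w \<in> set (leafaddrs Tm) then Pass else Split)
                 | VP w \<Rightarrow> (if w \<in> set (leafaddrs Tp) then Pass else Merge)
                 | VF _ \<Rightarrow> Pass),
      sd_edges = EM ` (nodes Tm - {[]}) \<union> EP ` (nodes Tp - {[]}) \<union> EJ ` {1..n} \<union> {ER},
      sd_tail = (\<lambda>e. case e of
                   EM w \<Rightarrow> (VM (butlast w), port (last w))
                 | EP w \<Rightarrow> (VP w, 0)
                 | EJ i \<Rightarrow> (VM (leafaddrs Tm ! (i - 1)), 0)
                 | ER \<Rightarrow> (VP [], 0)
                 | EF _ \<Rightarrow> (VF 0, 0)),
      sd_head = (\<lambda>e. case e of
                   EM w \<Rightarrow> (VM w, 0)
                 | EP w \<Rightarrow> (VP (butlast w), port (last w))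
                 | EJ i \<Rightarrow> (VP (leafaddrs Tp ! (sigma n k i - 1)), 0)
                 | ER \<Rightarrow> (VM [], 0)
                 | EF _ \<Rightarrow> (VF 0, 0)),
      sd_red = (\<lambda>e. if e = ER then 1 else 0),
      sd_blue = (\<lambda>e. case e of EJ i \<Rightarrow> (if n < i + k then 1 else 0) | _ \<Rightarrow> 0) \<rparr>)"

definition ms_strand :: "sd \<Rightarrow> eid list \<Rightarrow> bool" where
  "ms_strand D es \<longleftrightarrow> es \<noteq> [] \<and> distinct es \<and> set es \<subseteq> sd_edges D
     \<and> fst (sd_tail D (hd es)) \<in> sd_verts D \<and> sd_kind D (fst (sd_tail D (hd es))) = Merge
     \<and> fst (sd_head D (last es)) \<in> sd_verts D \<and> sd_kind D (fst (sd_head D (last es))) = Split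
     \<and> (\<forall>j. Suc j < length es \<longrightarrow>
            fst (sd_head D (es ! j)) = fst (sd_tail D (es ! Suc j))
          \<and> fst (sd_head D (es ! j)) \<in> sd_verts D
          \<and> sd_kind D (fst (sd_head D (es ! j))) = Pass)"

text \<open>The strand es (labels y = sums along es) from merge m to split
  s is deleted together with m and s; strand x_i (entering m at port i) is joined to strand
  z_i (leaving s at port i) through a new piece carrying the labels y (x_i ~ a_i -> b_i ~ z_i,
  with new bivalent vertices a_i, b_i). Coincidences such as x_2 = z_1 are handled
  automatically since head and tail of an edge are re-pointed independently.\<close>
inductive ruleI :: "sd \<Rightarrow> sd \<Rightarrow> bool" where
  "\<lbrakk> ms_strand D es;
     m = fst (sd_tail D (hd es)); s = fst (sd_head D (last es));
     P = set (map (\<lambda>e. fst (sd_head D e)) (butlast es));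
     x1 \<in> sd_edges D; sd_head D x1 = (m, 0); x2 \<in> sd_edges D; sd_head D x2 = (m, 1);
     z1 \<in> sd_edges D; sd_tail D z1 = (s, 0); z2 \<in> sd_edges D; sd_tail D z2 = (s, 1);
     distinct [a1, b1, a2, b2]; {a1, b1, a2, b2} \<inter> sd_verts D = {};
     f1 \<noteq> f2; f1 \<notin> sd_edges D; f2 \<notin> sd_edges D;
     ry = sum_list (map (sd_red D) es); by = sum_list (map (sd_blue D) es);
     D' = \<lparr> sd_verts = (sd_verts D - ({m, s} \<union> P)) \<union> {a1, b1, a2, b2},
            sd_kind = (sd_kind D)(a1 := Pass, b1 := Pass, a2 := Pass, b2 := Pass),
            sd_edges = (sd_edges D - set es) \<union> {f1, f2},
            sd_tail = (sd_tail D)(z1 := (b1, 0), z2 := (b2, 0), f1 := (a1, 0), f2 := (a2, 0)),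
            sd_head = (sd_head D)(x1 := (a1, 0), x2 := (a2, 0), f1 := (b1, 0), f2 := (b2, 0)),
            sd_red = (sd_red D)(f1 := ry, f2 := ry),
            sd_blue = (sd_blue D)(f1 := by, f2 := by) \<rparr> \<rbrakk>
   \<Longrightarrow> ruleI D D'"

text \<open>Oriented cycles (closed loops included: cycles through bivalent vertices only).\<close>
definition is_cycle :: "sd \<Rightarrow> eid list \<Rightarrow> bool" where
  "is_cycle D cs \<longleftrightarrow> cs \<noteq> [] \<and> set cs \<subseteq> sd_edges D
     \<and> distinct (map (\<lambda>e. fst (sd_tail D e)) cs)
     \<and> (\<forall>j < length cs. fst (sd_head D (cs ! j)) = fst (sd_tail D (cs ! ((j + 1) mod length cs))))"

definition cycle_blue :: "sd \<Rightarrow> eid list \<Rightarrow> nat" where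
  "cycle_blue D cs = sum_list (map (sd_blue D) cs)"

definition cycle_red :: "sd \<Rightarrow> eid list \<Rightarrow> nat" where
  "cycle_red D cs = sum_list (map (sd_red D) cs)"

end

theory Submission
  imports Defs
begin

lemma nil_nodes[simp]: "[] \<in> nodes T"
  by (cases T) auto

lemma leaf_sub_nodes: "set (leafaddrs T) \<subseteq> nodes T"
  by (induction T) auto

lemma snoc_nodes: "w @ [b] \<in> nodes T \<Longrightarrow> w \<in> nodes T \<and> w \<notin> set (leafaddrs T)"
proof (induction T arbitrary: w)
  case Leaf then show ?case by simp
next
  case (Node l r)
  show ?case
  proof (cases w)
    case Nil
    have "\<forall>x\<in>set (leafaddrs (Node l r)). x \<noteq> []" by auto
    then show ?thesis using Nil by auto
  next
    case (Cons c w')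
    then show ?thesis using Node by (cases c) auto
  qed
qed

lemma nodes_snoc: "w \<in> nodes T \<Longrightarrow> w \<notin> set (leafaddrs T) \<Longrightarrow> w @ [b] \<in> nodes T"
proof (induction T arbitrary: w)
  case Leaf then show ?case by simp
next
  case (Node l r)
  show ?case
  proof (cases w)
    case Nil
    then show ?thesis by (cases b) (auto intro!: image_eqI[where x="[]"])
  next
    case (Cons c w')
    show ?thesis
    proof (cases c)
      case True
      then have "w' \<in> nodes r" "w' \<notin> set (leafaddrs r)" using Node.prems Cons by auto
      then have "w' @ [b] \<in> nodes r" by (rule Node.IH(2))
      then show ?thesis using Cons True by simp
    next
      case False
      then have "w' \<in> nodes l" "w' \<notin> set (leafaddrs l)" using Node.prems Cons by auto
      then have "w' @ [b] \<in> nodes l" by (rule Node.IH(1))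
      then show ?thesis using Cons False by simp
    qed
  qed
qed

lemma distinct_leafaddrs: "distinct (leafaddrs T)"
  by (induction T) (auto simp: distinct_map)

lemma length_leafaddrs[simp]: "length (leafaddrs T) = nleaves T"
  by (induction T) auto

lemma finite_nodes: "finite (nodes T)"
  by (induction T) auto

fun ht :: "tree \<Rightarrow> nat" where
  "ht Leaf = 0" | "ht (Node l r) = Suc (max (ht l) (ht r))"

lemma nodes_len: "w \<in> nodes T \<Longrightarrow> length w \<le> ht T"
  by (induction T arbitrary: w) fastforce+

lemma nleaves_pos: "nleaves T \<ge> 1"
  by (induction T) auto

lemma nil_leaf: "[] \<in> set (leafaddrs T) \<longleftrightarrow> T = Leaf"
  by (cases T) auto

lemma nleaves_one: "nleaves T = 1 \<longleftrightarrow> T = Leaf"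
proof (cases T)
  case (Node l r)
  then show ?thesis using nleaves_pos[of l] nleaves_pos[of r] by simp
qed simp

lemma butlast_nodes: "w \<in> nodes T \<Longrightarrow> w \<noteq> [] \<Longrightarrow> butlast w \<in> nodes T \<and> butlast w \<notin> set (leafaddrs T)"
  using snoc_nodes[of "butlast w" "last w" T] by (simp add: append_butlast_last_id)

fun ivf :: "bool list \<Rightarrow> real \<Rightarrow> real \<Rightarrow> real \<times> real" where
  "ivf [] p q = (p, q)"
| "ivf (b # w) p q = (if b then ivf w ((p + q) / 2) q else ivf w p ((p + q) / 2))"

definition aff :: "real \<times> real \<Rightarrow> real \<Rightarrow> real" where
  "aff I t = fst I + t * (snd I - fst I)"

lemma leafints_ivf: "leafints T p q = map (\<lambda>w. ivf w p q) (leafaddrs T)"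
  by (induction T arbitrary: p q) (auto simp: comp_def)

lemma ivf_snoc: "ivf (w @ [b]) p q = (if b then ((fst (ivf w p q) + snd (ivf w p q)) / 2, snd (ivf w p q))
    else (fst (ivf w p q), (fst (ivf w p q) + snd (ivf w p q)) / 2))"
  by (induction w arbitrary: p q) auto

lemma ivf_bounds: "p < q \<Longrightarrow> p \<le> fst (ivf w p q) \<and> snd (ivf w p q) \<le> q \<and> fst (ivf w p q) < snd (ivf w p q)"
proof (induction w arbitrary: p q)
  case Nil then show ?case by simp
next
  case (Cons b w)
  show ?case
  proof (cases b)
    case True
    with Cons.IH[of "(p+q)/2" q] Cons.prems show ?thesis by auto
  next
    case False
    with Cons.IH[of p "(p+q)/2"] Cons.prems show ?thesis by auto
  qed
qed

lemma aff_snoc: "aff (ivf (w @ [b]) p q) t = aff (ivf w p q) ((t + (if b then 1 else 0)) / 2)"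
  by (simp add: ivf_snoc aff_def field_simps)

lemma chain_leafints:
  "p < q \<Longrightarrow> length (leafints T p q) = nleaves T
   \<and> fst (leafints T p q ! 0) = p
   \<and> snd (leafints T p q ! (nleaves T - 1)) = q
   \<and> (\<forall>j. Suc j < nleaves T \<longrightarrow> snd (leafints T p q ! j) = fst (leafints T p q ! Suc j))"
proof (induction T arbitrary: p q)
  case Leaf then show ?case by simp
next
  case (Node l r)
  define m where "m = (p + q) / 2"
  have pm: "p < m" "m < q" using Node.prems by (auto simp: m_def)
  note L = Node.IH(1)[OF pm(1)] and R = Node.IH(2)[OF pm(2)]
  have nl: "nleaves l \<ge> 1" "nleaves r \<ge> 1" by (rule nleaves_pos)+
  let ?A = "leafints l p m" and ?B = "leafints r m q"
  have eq: "leafints (Node l r) p q = ?A @ ?B" by (simp add: m_def)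
  show ?case unfolding eq
  proof (intro conjI allI impI)
    show "length (?A @ ?B) = nleaves (Node l r)" using L R by simp
    show "fst ((?A @ ?B) ! 0) = p" using L R nl by (simp add: nth_append)
    have "nleaves (Node l r) - 1 = length ?A + (nleaves r - 1)" using L nl by simp
    moreover have "(?A @ ?B) ! (length ?A + (nleaves r - 1)) = ?B ! (nleaves r - 1)"
      by (rule nth_append_length_plus)
    ultimately show "snd ((?A @ ?B) ! (nleaves (Node l r) - 1)) = q"
      using R by simp
  next
    fix j assume j: "Suc j < nleaves (Node l r)"
    consider "Suc j < nleaves l" | "Suc j = nleaves l" | "Suc j > nleaves l" by linarith
    then show "snd ((?A @ ?B) ! j) = fst ((?A @ ?B) ! Suc j)"
    proof cases
      case 1 then show ?thesis using L by (simp add: nth_append)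
    next
      case 2
      have lA: "length ?A = Suc j" using 2 L by linarith
      have a: "(?A @ ?B) ! j = ?A ! j" using lA by (simp add: nth_append)
      have b: "(?A @ ?B) ! Suc j = ?B ! 0" using lA nth_append_length_plus[of ?A ?B 0] by simp
      have jj: "j = nleaves l - 1" using 2 by linarith
      have c: "snd (?A ! j) = m" using L[THEN conjunct2, THEN conjunct2, THEN conjunct1] jj by simp
      have d: "fst (?B ! 0) = m" using R[THEN conjunct2, THEN conjunct1] .
      show ?thesis using a b c d by simp
    next
      case 3
      define j' where "j' = j - nleaves l"
      have lA: "length ?A = nleaves l" using L by blast
      have jj: "j = length ?A + j'" "Suc j = length ?A + Suc j'" "Suc j' < nleaves r"
        using 3 j lA unfolding j'_def by auto
      have "(?A @ ?B) ! j = ?B ! j'"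
        unfolding jj(1) by (rule nth_append_length_plus)
      moreover have "(?A @ ?B) ! Suc j = ?B ! Suc j'"
        unfolding jj(2) by (rule nth_append_length_plus)
      ultimately
      show ?thesis using R jj(3) by simp
    qed
  qed
qed

lemma LI_bounds:
  assumes "j < nleaves T"
  shows "0 \<le> fst (leafints T 0 1 ! j) \<and> snd (leafints T 0 1 ! j) \<le> 1
         \<and> fst (leafints T 0 1 ! j) < snd (leafints T 0 1 ! j)"
  using assms ivf_bounds[of 0 1 "leafaddrs T ! j"] by (simp add: leafints_ivf)

lemma LI_order:
  assumes "j < j'" "j' < nleaves T"
  shows "snd (leafints T 0 1 ! j) \<le> fst (leafints T 0 1 ! j')"
  using assms
proof (induction j' arbitrary: j)
  case 0 then show ?case by simp
next
  case (Suc j' j)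
  have ch: "snd (leafints T 0 1 ! j') = fst (leafints T 0 1 ! Suc j')"
    using chain_leafints[of 0 1 T] Suc.prems by simp
  show ?case
  proof (cases "j = j'")
    case True then show ?thesis using ch by simp
  next
    case False
    then have "snd (leafints T 0 1 ! j) \<le> fst (leafints T 0 1 ! j')" using Suc by simp
    also have "\<dots> \<le> snd (leafints T 0 1 ! j')" using LI_bounds[of j' T] Suc.prems by simp
    finally show ?thesis using ch by simp
  qed
qed

lemma LI_least:
  assumes "j < nleaves T" "fst (leafints T 0 1 ! j) \<le> y" "y < snd (leafints T 0 1 ! j)"
  shows "(LEAST j. y < snd (leafints T 0 1 ! j)) = j"
proof (rule Least_equality)
  show "y < snd (leafints T 0 1 ! j)" by fact
  fix j' assume "y < snd (leafints T 0 1 ! j')"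
  show "j \<le> j'"
  proof (rule ccontr)
    assume "\<not> j \<le> j'"
    then have "snd (leafints T 0 1 ! j') \<le> fst (leafints T 0 1 ! j)" using LI_order assms by simp
    then show False using assms \<open>y < snd (leafints T 0 1 ! j')\<close> by simp
  qed
qed

lemma LI_cover:
  assumes "0 \<le> y" "y < 1"
  shows "\<exists>j < nleaves T. fst (leafints T 0 1 ! j) \<le> y \<and> y < snd (leafints T 0 1 ! j)"
proof -
  let ?L = "leafints T 0 1"
  have ch: "fst (?L ! 0) = 0" "snd (?L ! (nleaves T - 1)) = 1"
     "\<forall>j. Suc j < nleaves T \<longrightarrow> snd (?L ! j) = fst (?L ! Suc j)"
    using chain_leafints[of 0 1 T] by auto
  have ex: "y < snd (?L ! (nleaves T - 1))" using ch assms by simp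
  define j where "j = (LEAST j. y < snd (?L ! j))"
  have j1: "y < snd (?L ! j)" unfolding j_def by (rule LeastI, rule ex)
  have j2: "j \<le> nleaves T - 1" unfolding j_def by (rule Least_le, rule ex)
  have j3: "fst (?L ! j) \<le> y"
  proof (cases j)
    case 0 then show ?thesis using ch assms by simp
  next
    case (Suc i)
    have "\<not> y < snd (?L ! i)" using Suc not_less_Least[of i "\<lambda>j. y < snd (?L ! j)"] j_def by simp
    moreover have "snd (?L ! i) = fst (?L ! j)" using ch Suc j2 nleaves_pos[of T] by simp
    ultimately show ?thesis by simp
  qed
  show ?thesis using j1 j2 j3 nleaves_pos[of T]
    by (intro exI[of _ j]) auto
qed

definition G :: "tree \<Rightarrow> tree \<Rightarrow> nat \<Rightarrow> real \<Rightarrow> real" where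
  "G Tm Tp k y =
     (let n = nleaves Tm; I = leafints Tm 0 1; J = leafints Tp 0 1;
          j = (LEAST j. y < snd (I ! j)); s = (j + k) mod n
      in fst (J ! s)
         + (y - fst (I ! j)) * (snd (J ! s) - fst (J ! s)) / (snd (I ! j) - fst (I ! j))
         + (if n < j + 1 + k then 1 else 0))"

lemma glift_G: "glift Tm Tp k x = of_int \<lfloor>x\<rfloor> + G Tm Tp k (frac x)"
  unfolding glift_def G_def Let_def by simp

definition Gv :: "tree \<Rightarrow> tree \<Rightarrow> nat \<Rightarrow> nat \<Rightarrow> real \<Rightarrow> real" where
  "Gv Tm Tp k j y =
     (let n = nleaves Tm; I = leafints Tm 0 1; J = leafints Tp 0 1; s = (j + k) mod n
      in fst (J ! s)
         + (y - fst (I ! j)) * (snd (J ! s) - fst (J ! s)) / (snd (I ! j) - fst (I ! j))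
         + (if n < j + 1 + k then 1 else 0))"

lemma G_Gv:
  assumes "j < nleaves Tm" "fst (leafints Tm 0 1 ! j) \<le> y" "y < snd (leafints Tm 0 1 ! j)"
  shows "G Tm Tp k y = Gv Tm Tp k j y"
  using LI_least[OF assms] unfolding G_def Gv_def Let_def by simp

locale setting =
  fixes Tm Tp :: tree and n k :: nat
  assumes nm: "nleaves Tm = n" and np: "nleaves Tp = n" and kn: "k < n"
begin

abbreviation "I \<equiv> leafints Tm 0 1"
abbreviation "J \<equiv> leafints Tp 0 1"
abbreviation "sj j \<equiv> (j + k) mod n"
abbreviation "wr j \<equiv> (if n < j + 1 + k then 1 else 0 :: real)"

lemma sj_lt: "sj j < n" using kn by simp

lemma Gv_bounds:
  assumes "j < n" "fst (I ! j) \<le> y" "y < snd (I ! j)"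
  shows "fst (J ! sj j) + wr j \<le> Gv Tm Tp k j y \<and> Gv Tm Tp k j y < snd (J ! sj j) + wr j"
proof -
  have a: "fst (I ! j) < snd (I ! j)" using LI_bounds[of j Tm] assms nm by simp
  have b: "fst (J ! sj j) < snd (J ! sj j)" using LI_bounds[of "sj j" Tp] sj_lt np by simp
  define r where "r = (y - fst (I ! j)) / (snd (I ! j) - fst (I ! j))"
  have r: "0 \<le> r" "r < 1" using a assms by (auto simp: r_def divide_simps)
  have "Gv Tm Tp k j y = fst (J ! sj j) + r * (snd (J ! sj j) - fst (J ! sj j)) + wr j"
    unfolding Gv_def Let_def r_def nm by simp
  moreover have "r * (snd (J ! sj j) - fst (J ! sj j)) < snd (J ! sj j) - fst (J ! sj j)"
    using r b by simp
  moreover have "0 \<le> r * (snd (J ! sj j) - fst (J ! sj j))" using r b by simp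
  ultimately show ?thesis by linarith
qed

lemma Gv_mono:
  assumes "j < n" "fst (I ! j) \<le> y" "y \<le> y'" "y' < snd (I ! j)"
  shows "Gv Tm Tp k j y \<le> Gv Tm Tp k j y'"
proof -
  have a: "fst (I ! j) < snd (I ! j)" using LI_bounds[of j Tm] assms nm by simp
  have b: "fst (J ! sj j) < snd (J ! sj j)" using LI_bounds[of "sj j" Tp] sj_lt np by simp
  have "(y - fst (I ! j)) * (snd (J ! sj j) - fst (J ! sj j)) \<le> (y' - fst (I ! j)) * (snd (J ! sj j) - fst (J ! sj j))"
    using b assms by (intro mult_right_mono) auto
  then show ?thesis unfolding Gv_def Let_def nm using a by (simp add: divide_right_mono)
qed

lemma wrap_order:
  assumes "j < j'" "j' < n"
  shows "snd (J ! sj j) + wr j \<le> fst (J ! sj j') + wr j'"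
proof -
  consider "n < j + 1 + k" | "\<not> n < j + 1 + k" "n < j' + 1 + k" | "\<not> n < j' + 1 + k" using assms by linarith
  then show ?thesis
  proof cases
    case 1
    then have w: "n < j' + 1 + k" using assms by simp
    have "sj j = j + k - n" "sj j' = j' + k - n" using 1 w assms kn
      by (simp_all add: mod_if le_mod_geq)
    then have "sj j < sj j'" using 1 assms by simp
    then have "snd (J ! sj j) \<le> fst (J ! sj j')" using LI_order[of "sj j" "sj j'" Tp] sj_lt np by simp
    then show ?thesis using 1 w by simp
  next
    case 2
    have "snd (J ! sj j) \<le> 1" using LI_bounds[of "sj j" Tp] sj_lt np by simp
    moreover have "0 \<le> fst (J ! sj j')" using LI_bounds[of "sj j'" Tp] sj_lt np by simp
    ultimately show ?thesis using 2 by simp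
  next
    case 3
    then have "sj j = j + k" "sj j' = j' + k" using assms by simp_all
    then have "sj j < sj j'" using assms by simp
    then have "snd (J ! sj j) \<le> fst (J ! sj j')" using LI_order[of "sj j" "sj j'" Tp] sj_lt np by simp
    then show ?thesis using 3 assms by simp
  qed
qed

lemma idx:
  assumes "0 \<le> y" "y < 1"
  obtains j where "j < n" "fst (I ! j) \<le> y" "y < snd (I ! j)" "G Tm Tp k y = Gv Tm Tp k j y"
  using LI_cover[OF assms, of Tm] G_Gv nm by auto

lemma G_mono:
  assumes "0 \<le> y" "y \<le> y'" "y' < 1"
  shows "G Tm Tp k y \<le> G Tm Tp k y'"
proof -
  have y1: "y < 1" "0 \<le> y'" using assms by simp_all
  obtain j where j: "j < n" "fst (I ! j) \<le> y" "y < snd (I ! j)" "G Tm Tp k y = Gv Tm Tp k j y"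
    using idx[OF assms(1) y1(1)] by blast
  obtain j' where j': "j' < n" "fst (I ! j') \<le> y'" "y' < snd (I ! j')" "G Tm Tp k y' = Gv Tm Tp k j' y'"
    using idx[OF y1(2) assms(3)] by blast
  consider "j = j'" | "j < j'" | "j' < j" by linarith
  then show ?thesis
  proof cases
    case 1 then show ?thesis using j j' Gv_mono[of j y y'] assms by simp
  next
    case 2
    have "G Tm Tp k y < snd (J ! sj j) + wr j" using Gv_bounds[OF j(1-3)] j(4) by simp
    also have "\<dots> \<le> fst (J ! sj j') + wr j'" using wrap_order 2 j' by simp
    also have "\<dots> \<le> G Tm Tp k y'" using Gv_bounds[OF j'(1-3)] j'(4) by simp
    finally show ?thesis by simp
  next
    case 3
    have "snd (I ! j') \<le> fst (I ! j)" using LI_order[of j' j Tm] 3 j nm by simp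
    then show ?thesis using j j' assms by simp
  qed
qed

lemma G0: "G Tm Tp k 0 = fst (J ! k)"
proof -
  have "fst (I ! 0) = 0" using chain_leafints[of 0 1 Tm] by simp
  moreover have "0 < snd (I ! 0)" using LI_bounds[of 0 Tm] nm kn by simp
  ultimately have "G Tm Tp k 0 = Gv Tm Tp k 0 0" using G_Gv[of 0 Tm 0] nm kn by simp
  also have "\<dots> = fst (J ! k)" unfolding Gv_def Let_def using kn nm \<open>fst (I ! 0) = 0\<close> by simp
  finally show ?thesis .
qed

lemma G_le:
  assumes "0 \<le> y" "y < 1"
  shows "G Tm Tp k y \<le> G Tm Tp k 0 + 1 \<and> 0 \<le> G Tm Tp k y \<and> G Tm Tp k y < 2"
proof -
  obtain j where j: "j < n" "fst (I ! j) \<le> y" "y < snd (I ! j)" "G Tm Tp k y = Gv Tm Tp k j y"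
    using idx[OF assms] by blast
  note gb = Gv_bounds[OF j(1-3)]
  have jb: "0 \<le> fst (J ! sj j)" "snd (J ! sj j) \<le> 1" using LI_bounds[of "sj j" Tp] sj_lt np by auto
  have "G Tm Tp k y \<le> fst (J ! k) + 1"
  proof (cases "n < j + 1 + k")
    case True
    then have "sj j = j + k - n" using j kn by (simp add: mod_if)
    then have lt: "sj j < k" using j True by simp
    then have "snd (J ! sj j) \<le> fst (J ! k)" using LI_order[of "sj j" k Tp] np kn by simp
    then show ?thesis using gb j True by simp
  next
    case False
    have "0 \<le> fst (J ! k)" using LI_bounds[of k Tp] np kn by simp
    then show ?thesis using gb j False jb by simp
  qed
  then show ?thesis using G0 gb j jb by (auto split: if_splits)
qed

abbreviation "gl \<equiv> glift Tm Tp k"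

lemma gl_shift: "gl (x + of_int m) = gl x + of_int m"
  unfolding glift_G by (simp add: frac_def)

lemma gl_shift_nat: "gl (x + real m) = gl x + real m"
  using gl_shift[of x "int m"] by simp

lemma gl_disp: "x - 1 < gl x \<and> gl x < x + 2"
proof -
  have f: "0 \<le> frac x" "frac x < 1" by (auto simp: frac_lt_1)
  have "x = of_int \<lfloor>x\<rfloor> + frac x" by (simp add: frac_def)
  then show ?thesis unfolding glift_G using G_le[OF f] f by linarith
qed

lemma gl_mono: "x \<le> x' \<Longrightarrow> gl x \<le> gl x'"
proof -
  assume xx: "x \<le> x'"
  have f: "0 \<le> frac x" "frac x < 1" "0 \<le> frac x'" "frac x' < 1" by (auto simp: frac_lt_1)
  have ex: "x = of_int \<lfloor>x\<rfloor> + frac x" "x' = of_int \<lfloor>x'\<rfloor> + frac x'" by (simp_all add: frac_def)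
  have fl: "\<lfloor>x\<rfloor> \<le> \<lfloor>x'\<rfloor>" using xx by (rule floor_mono)
  show ?thesis
  proof (cases "\<lfloor>x\<rfloor> = \<lfloor>x'\<rfloor>")
    case True
    then have "frac x \<le> frac x'" using ex xx by linarith
    then show ?thesis unfolding glift_G using G_mono f True by simp
  next
    case False
    then have "\<lfloor>x\<rfloor> + 1 \<le> \<lfloor>x'\<rfloor>" using fl by simp
    then have "real_of_int \<lfloor>x\<rfloor> + 1 \<le> of_int \<lfloor>x'\<rfloor>" by linarith
    moreover have "G Tm Tp k (frac x) \<le> G Tm Tp k 0 + 1" using G_le f by simp
    moreover have "G Tm Tp k 0 \<le> G Tm Tp k (frac x')" using G_mono[of 0 "frac x'"] f by simp
    ultimately show ?thesis unfolding glift_G by linarith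
  qed
qed

lemma glp_mono: "x \<le> x' \<Longrightarrow> (gl ^^ N) x \<le> (gl ^^ N) x'"
  by (induction N) (auto intro: gl_mono)

lemma glp_shift: "(gl ^^ N) (x + real m) = (gl ^^ N) x + real m"
  by (induction N) (auto simp: gl_shift_nat)

lemma glp_disp: "\<bar>(gl ^^ N) x - x\<bar> \<le> 2 * real N"
proof (induction N)
  case 0 then show ?case by simp
next
  case (Suc N)
  have "\<bar>gl ((gl ^^ N) x) - (gl ^^ N) x\<bar> \<le> 2" using gl_disp[of "(gl ^^ N) x"] by linarith
  then show ?case using Suc by simp
qed

lemma glp_unit:
  assumes "0 \<le> y" "y \<le> 1"
  shows "\<bar>(gl ^^ N) y - (gl ^^ N) 0\<bar> \<le> 1"
  using glp_mono[of 0 y N] glp_mono[of y 1 N] glp_shift[of N 0 1] assms by simp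

end

definition stp :: "sd \<Rightarrow> eid \<Rightarrow> real \<Rightarrow> eid \<Rightarrow> real \<Rightarrow> bool" where
  "stp D e t e' t' \<longleftrightarrow> e \<in> sd_edges D \<and> e' \<in> sd_edges D
     \<and> fst (sd_head D e) = fst (sd_tail D e') \<and> fst (sd_head D e) \<in> sd_verts D
     \<and> (sd_kind D (fst (sd_head D e)) = Pass \<longrightarrow> t' = t)
     \<and> (sd_kind D (fst (sd_head D e)) = Merge \<longrightarrow> t' = (t + real (snd (sd_head D e))) / 2)
     \<and> (sd_kind D (fst (sd_head D e)) = Split \<longrightarrow> t = (t' + real (snd (sd_tail D e'))) / 2)"

abbreviation stq :: "sd \<Rightarrow> eid \<times> real \<Rightarrow> eid \<times> real \<Rightarrow> bool" where
  "stq D p q \<equiv> stp D (fst p) (snd p) (fst q) (snd q)"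

definition traj :: "sd \<Rightarrow> (eid \<times> real) list \<Rightarrow> bool" where
  "traj D ss \<longleftrightarrow> ss \<noteq> [] \<and> (\<forall>p \<in> set ss. fst p \<in> sd_edges D \<and> 0 \<le> snd p \<and> snd p < 1)
     \<and> successively (stq D) ss"

definition rs :: "sd \<Rightarrow> (eid \<times> real) list \<Rightarrow> nat" where
  "rs D ss = sum_list (map (\<lambda>p. sd_red D (fst p)) ss)"
definition bs :: "sd \<Rightarrow> (eid \<times> real) list \<Rightarrow> nat" where
  "bs D ss = sum_list (map (\<lambda>p. sd_blue D (fst p)) ss)"

definition wf :: "sd \<Rightarrow> bool" where
  "wf D \<longleftrightarrow> finite (sd_verts D) \<and> finite (sd_edges D) \<and> sd_verts D \<noteq> {}
    \<and> (\<forall>e\<in>sd_edges D. fst (sd_tail D e) \<in> sd_verts D \<and> fst (sd_head D e) \<in> sd_verts D)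
    \<and> (\<forall>e\<in>sd_edges D. snd (sd_tail D e) \<le> 1 \<and> (sd_kind D (fst (sd_tail D e)) \<noteq> Split \<longrightarrow> snd (sd_tail D e) = 0)
          \<and> snd (sd_head D e) \<le> 1 \<and> (sd_kind D (fst (sd_head D e)) \<noteq> Merge \<longrightarrow> snd (sd_head D e) = 0))
    \<and> inj_on (sd_tail D) (sd_edges D) \<and> inj_on (sd_head D) (sd_edges D)
    \<and> (\<forall>v\<in>sd_verts D. \<exists>e\<in>sd_edges D. fst (sd_tail D e) = v)"

lemma traj_append:
  assumes "traj D xs" "traj D ys" "stq D (last xs) (hd ys)"
  shows "traj D (xs @ ys)"
  using assms unfolding traj_def by (auto simp: successively_append_iff)

lemma traj_concat:
  assumes "xs \<noteq> []" "\<forall>p\<in>set xs. traj D (ex p)"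
    "successively (\<lambda>p q. stq D (last (ex p)) (hd (ex q))) xs"
  shows "traj D (concat (map ex xs))"
  using assms
proof (induction xs)
  case Nil then show ?case by simp
next
  case (Cons p xs)
  show ?case
  proof (cases "xs = []")
    case True then show ?thesis using Cons.prems by simp
  next
    case False
    have t1: "traj D (concat (map ex xs))" using Cons False by (auto simp: successively_Cons)
    have ne: "ex (hd xs) \<noteq> []" using Cons.prems False by (auto simp: traj_def)
    have "hd (concat (map ex xs)) = hd (ex (hd xs))" using False ne by (cases xs) auto
    moreover have "stq D (last (ex p)) (hd (ex (hd xs)))" using Cons.prems False by (simp add: successively_Cons)
    ultimately show ?thesis using traj_append[of D "ex p" "concat (map ex xs)"] t1 Cons.prems by simp
  qed
qed

locale rI =
  fixes D :: sd and es :: "eid list" and m s :: vid and P :: "vid set"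
    and x1 x2 z1 z2 :: eid and a1 b1 a2 b2 :: vid and f1 f2 :: eid and ry bb :: nat and D' :: sd
  assumes ms: "ms_strand D es"
    and mdef: "m = fst (sd_tail D (hd es))" and sdef: "s = fst (sd_head D (last es))"
    and Pdef: "P = set (map (\<lambda>e. fst (sd_head D e)) (butlast es))"
    and x1: "x1 \<in> sd_edges D" "sd_head D x1 = (m, 0)"
    and x2: "x2 \<in> sd_edges D" "sd_head D x2 = (m, 1)"
    and z1: "z1 \<in> sd_edges D" "sd_tail D z1 = (s, 0)"
    and z2: "z2 \<in> sd_edges D" "sd_tail D z2 = (s, 1)"
    and dist: "distinct [a1, b1, a2, b2]" and fresh: "{a1, b1, a2, b2} \<inter> sd_verts D = {}"
    and f12: "f1 \<noteq> f2" "f1 \<notin> sd_edges D" "f2 \<notin> sd_edges D"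
    and rydef: "ry = sum_list (map (sd_red D) es)" and bbdef: "bb = sum_list (map (sd_blue D) es)"
    and D'def: "D' = \<lparr> sd_verts = (sd_verts D - ({m, s} \<union> P)) \<union> {a1, b1, a2, b2},
            sd_kind = (sd_kind D)(a1 := Pass, b1 := Pass, a2 := Pass, b2 := Pass),
            sd_edges = (sd_edges D - set es) \<union> {f1, f2},
            sd_tail = (sd_tail D)(z1 := (b1, 0), z2 := (b2, 0), f1 := (a1, 0), f2 := (a2, 0)),
            sd_head = (sd_head D)(x1 := (a1, 0), x2 := (a2, 0), f1 := (b1, 0), f2 := (b2, 0)),
            sd_red = (sd_red D)(f1 := ry, f2 := ry),
            sd_blue = (sd_blue D)(f1 := bb, f2 := bb) \<rparr>"
    and wfD: "wf D"
begin

abbreviation "V \<equiv> sd_verts D"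
abbreviation "E \<equiv> sd_edges D"
abbreviation "tl' \<equiv> sd_tail D"
abbreviation "hd' \<equiv> sd_head D"
abbreviation "kd \<equiv> sd_kind D"

lemma wfD_parts:
  "\<And>e. e \<in> E \<Longrightarrow> fst (tl' e) \<in> V" "\<And>e. e \<in> E \<Longrightarrow> fst (hd' e) \<in> V"
  "\<And>e. e \<in> E \<Longrightarrow> snd (tl' e) \<le> 1" "\<And>e. e \<in> E \<Longrightarrow> kd (fst (tl' e)) \<noteq> Split \<Longrightarrow> snd (tl' e) = 0"
  "\<And>e. e \<in> E \<Longrightarrow> snd (hd' e) \<le> 1" "\<And>e. e \<in> E \<Longrightarrow> kd (fst (hd' e)) \<noteq> Merge \<Longrightarrow> snd (hd' e) = 0"
  "inj_on tl' E" "inj_on hd' E"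
  using wfD unfolding wf_def by auto

lemma es_ne: "es \<noteq> []" using ms unfolding ms_strand_def by simp
lemma es_sub: "set es \<subseteq> E" using ms unfolding ms_strand_def by simp
lemma m_V: "m \<in> V" and m_k: "kd m = Merge" and s_V: "s \<in> V" and s_k: "kd s = Split"
  using ms mdef sdef unfolding ms_strand_def by auto
lemma es_link: "Suc j < length es \<Longrightarrow> fst (hd' (es ! j)) = fst (tl' (es ! Suc j))
   \<and> fst (hd' (es ! j)) \<in> V \<and> kd (fst (hd' (es ! j))) = Pass"
  using ms unfolding ms_strand_def by blast

lemma es_nth_E: "j < length es \<Longrightarrow> es ! j \<in> E" using es_sub by auto

lemma es_head_kind: "j < length es \<Longrightarrow> kd (fst (hd' (es ! j))) \<in> {Pass, Split}"
proof -
  assume j: "j < length es"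
  show ?thesis
  proof (cases "Suc j < length es")
    case True
    have "kd (fst (hd' (es ! j))) = Pass" using es_link[OF True] by blast
    then show ?thesis by simp
  next
    case False
    then have "j = length es - 1" using j by simp
    then have "es ! j = last es" using es_ne by (simp add: last_conv_nth)
    then show ?thesis using s_k sdef by simp
  qed
qed

lemma es_tail_kind: "j < length es \<Longrightarrow> kd (fst (tl' (es ! j))) \<in> {Pass, Merge}"
proof -
  assume j: "j < length es"
  show ?thesis
  proof (cases j)
    case 0 then show ?thesis using m_k mdef es_ne by (simp add: hd_conv_nth)
  next
    case (Suc i)
    then have si: "Suc i < length es" using j by simp
    have "kd (fst (tl' (es ! Suc i))) = Pass" using es_link[OF si] by metis
    then show ?thesis using Suc by simp
  qed
qed

lemma es_ports: "e \<in> set es \<Longrightarrow> snd (hd' e) = 0 \<and> snd (tl' e) = 0"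
proof -
  assume "e \<in> set es"
  then obtain j where j: "j < length es" "e = es ! j" by (auto simp: in_set_conv_nth)
  have "e \<in> E" using j es_nth_E by simp
  then show ?thesis using es_head_kind[OF j(1)] es_tail_kind[OF j(1)] wfD_parts(4,6) j by auto
qed

lemma x_notin: "x1 \<notin> set es" "x2 \<notin> set es"
proof -
  have H: "kd (fst (hd' e)) \<noteq> Merge" if ein: "e \<in> set es" for e
  proof -
    obtain j where j: "j < length es" "es ! j = e" using ein by (auto simp: in_set_conv_nth)
    show ?thesis using es_head_kind[OF j(1)] j(2) by auto
  qed
  show "x1 \<notin> set es"
  proof
    assume "x1 \<in> set es"
    then have "kd (fst (hd' x1)) \<noteq> Merge" by (rule H)
    then show False using x1(2) m_k by simp
  qed
  show "x2 \<notin> set es"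
  proof
    assume "x2 \<in> set es"
    then have "kd (fst (hd' x2)) \<noteq> Merge" by (rule H)
    then show False using x2(2) m_k by simp
  qed
qed

lemma z_notin: "z1 \<notin> set es" "z2 \<notin> set es"
proof -
  have H: "kd (fst (tl' e)) \<noteq> Split" if ein: "e \<in> set es" for e
  proof -
    obtain j where j: "j < length es" "es ! j = e" using ein by (auto simp: in_set_conv_nth)
    show ?thesis using es_tail_kind[OF j(1)] j(2) by auto
  qed
  show "z1 \<notin> set es"
  proof
    assume "z1 \<in> set es"
    then have "kd (fst (tl' z1)) \<noteq> Split" by (rule H)
    then show False using z1(2) s_k by simp
  qed
  show "z2 \<notin> set es"
  proof
    assume "z2 \<in> set es"
    then have "kd (fst (tl' z2)) \<noteq> Split" by (rule H)
    then show False using z2(2) s_k by simp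
  qed
qed

lemma x12: "x1 \<noteq> x2" using x1 x2 by auto
lemma z12: "z1 \<noteq> z2" using z1 z2 by auto

lemma f_notin: "f1 \<notin> set es" "f2 \<notin> set es" using f12 es_sub by auto

lemma P_char: "v \<in> P \<Longrightarrow> \<exists>j. Suc j < length es \<and> v = fst (hd' (es ! j))"
proof -
  assume "v \<in> P"
  then obtain i where i: "i < length (butlast es)" "v = fst (hd' (butlast es ! i))"
    unfolding Pdef by (auto simp: in_set_conv_nth)
  then have "Suc i < length es" "butlast es ! i = es ! i" by (auto simp: nth_butlast)
  then show ?thesis using i by auto
qed

lemma tail_not_removed:
  assumes "e \<in> E" "e \<notin> set es" "e \<noteq> z1" "e \<noteq> z2"
  shows "fst (tl' e) \<notin> {m, s} \<union> P"
proof
  assume a: "fst (tl' e) \<in> {m, s} \<union> P"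
  have inj: "inj_on tl' E" by (rule wfD_parts)
  consider "fst (tl' e) = m" | "fst (tl' e) = s" | "fst (tl' e) \<in> P" using a by blast
  then show False
  proof cases
    case 1
    have "snd (tl' e) = 0" using wfD_parts(4)[OF assms(1)] 1 m_k by simp
    moreover have "tl' (hd es) = (m, 0)" using es_ports[of "hd es"] es_ne mdef by (cases "tl' (hd es)") auto
    ultimately have "tl' e = tl' (hd es)" using 1 by (cases "tl' e") auto
    moreover have "hd es \<in> E" using es_sub es_ne by auto
    ultimately have "e = hd es" using inj assms(1) by (simp add: inj_on_eq_iff)
    then show False using assms(2) es_ne by simp
  next
    case 2
    have "snd (tl' e) \<le> 1" using wfD_parts(3)[OF assms(1)] .
    then have "tl' e = tl' z1 \<or> tl' e = tl' z2" using 2 z1 z2 by (cases "tl' e") auto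
    moreover have "tl' e = tl' z1 \<Longrightarrow> e = z1" using inj_onD[OF inj _ assms(1) z1(1)] .
    moreover have "tl' e = tl' z2 \<Longrightarrow> e = z2" using inj_onD[OF inj _ assms(1) z2(1)] .
    ultimately show False using assms(3,4) by blast
  next
    case 3
    then obtain j where j: "Suc j < length es" "fst (tl' e) = fst (hd' (es ! j))" using P_char by blast
    note l = es_link[OF j(1)]
    have e1: "es ! Suc j \<in> set es" using j by simp
    have kp: "kd (fst (tl' e)) = Pass" using l j(2) by metis
    have "snd (tl' e) = 0" using wfD_parts(4)[OF assms(1)] kp by simp
    then have "tl' e = tl' (es ! Suc j)" using es_ports[OF e1] l j by (cases "tl' e", cases "tl' (es ! Suc j)") auto
    moreover have "es ! Suc j \<in> E" using es_sub e1 by auto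
    ultimately have "e = es ! Suc j" using inj assms(1) by (simp add: inj_on_eq_iff)
    then show False using assms(2) e1 by simp
  qed
qed

lemma head_not_removed:
  assumes "e \<in> E" "e \<notin> set es" "e \<noteq> x1" "e \<noteq> x2"
  shows "fst (hd' e) \<notin> {m, s} \<union> P"
proof
  assume a: "fst (hd' e) \<in> {m, s} \<union> P"
  have inj: "inj_on hd' E" by (rule wfD_parts)
  consider "fst (hd' e) = m" | "fst (hd' e) = s" | "fst (hd' e) \<in> P" using a by blast
  then show False
  proof cases
    case 1
    have "snd (hd' e) \<le> 1" using wfD_parts(5)[OF assms(1)] .
    then have "hd' e = hd' x1 \<or> hd' e = hd' x2" using 1 x1 x2 by (cases "hd' e") auto
    moreover have "hd' e = hd' x1 \<Longrightarrow> e = x1" using inj_onD[OF inj _ assms(1) x1(1)] .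
    moreover have "hd' e = hd' x2 \<Longrightarrow> e = x2" using inj_onD[OF inj _ assms(1) x2(1)] .
    ultimately show False using assms(3,4) by blast
  next
    case 2
    have "snd (hd' e) = 0" using wfD_parts(6)[OF assms(1)] 2 s_k by simp
    moreover have "hd' (last es) = (s, 0)" using es_ports[of "last es"] es_ne sdef by (cases "hd' (last es)") auto
    ultimately have "hd' e = hd' (last es)" using 2 by (cases "hd' e") auto
    moreover have "last es \<in> E" using es_sub es_ne by auto
    ultimately have "e = last es" using inj assms(1) by (simp add: inj_on_eq_iff)
    then show False using assms(2) es_ne by simp
  next
    case 3
    then obtain j where j: "Suc j < length es" "fst (hd' e) = fst (hd' (es ! j))" using P_char by blast
    note l = es_link[OF j(1)]
    have e1: "es ! j \<in> set es" using j by simp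
    have kp: "kd (fst (hd' e)) = Pass" using l j(2) by metis
    have "snd (hd' e) = 0" using wfD_parts(6)[OF assms(1)] kp by simp
    then have "hd' e = hd' (es ! j)" using es_ports[OF e1] l j by (cases "hd' e", cases "hd' (es ! j)") auto
    moreover have "es ! j \<in> E" using es_sub e1 by auto
    ultimately have "e = es ! j" using inj assms(1) by (simp add: inj_on_eq_iff)
    then show False using assms(2) e1 by simp
  qed
qed

lemma new_notV: "a1 \<notin> V" "b1 \<notin> V" "a2 \<notin> V" "b2 \<notin> V" using fresh by auto

lemma D'_simps:
  "sd_verts D' = (V - ({m, s} \<union> P)) \<union> {a1, b1, a2, b2}"
  "sd_kind D' = kd(a1 := Pass, b1 := Pass, a2 := Pass, b2 := Pass)"
  "sd_edges D' = (E - set es) \<union> {f1, f2}"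
  "sd_tail D' = tl'(z1 := (b1, 0), z2 := (b2, 0), f1 := (a1, 0), f2 := (a2, 0))"
  "sd_head D' = hd'(x1 := (a1, 0), x2 := (a2, 0), f1 := (b1, 0), f2 := (b2, 0))"
  "sd_red D' = (sd_red D)(f1 := ry, f2 := ry)"
  "sd_blue D' = (sd_blue D)(f1 := bb, f2 := bb)"
  by (simp_all add: D'def)

lemma fz: "f1 \<noteq> z1" "f1 \<noteq> z2" "f2 \<noteq> z1" "f2 \<noteq> z2" "f1 \<noteq> x1" "f1 \<noteq> x2" "f2 \<noteq> x1" "f2 \<noteq> x2"
  using f12 z1 z2 x1 x2 by auto

lemma tail'_old: "e \<in> E \<Longrightarrow> e \<noteq> z1 \<Longrightarrow> e \<noteq> z2 \<Longrightarrow> sd_tail D' e = tl' e"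
  using f12 by (auto simp: D'_simps)
lemma head'_old: "e \<in> E \<Longrightarrow> e \<noteq> x1 \<Longrightarrow> e \<noteq> x2 \<Longrightarrow> sd_head D' e = hd' e"
  using f12 by (auto simp: D'_simps)
lemma tail'_new: "sd_tail D' z1 = (b1, 0)" "sd_tail D' z2 = (b2, 0)" "sd_tail D' f1 = (a1, 0)" "sd_tail D' f2 = (a2, 0)"
  using fz z12 f12 by (auto simp: D'_simps)
lemma head'_new: "sd_head D' x1 = (a1, 0)" "sd_head D' x2 = (a2, 0)" "sd_head D' f1 = (b1, 0)" "sd_head D' f2 = (b2, 0)"
  using fz x12 f12 by (auto simp: D'_simps)
lemma kind'_old: "v \<in> V \<Longrightarrow> sd_kind D' v = kd v"
  using new_notV by (auto simp: D'_simps)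
lemma kind'_new: "sd_kind D' a1 = Pass" "sd_kind D' b1 = Pass" "sd_kind D' a2 = Pass" "sd_kind D' b2 = Pass"
  by (auto simp: D'_simps)

end

context rI
begin

lemma es_tail_removed: "e \<in> set es \<Longrightarrow> fst (tl' e) \<in> {m} \<union> P"
proof -
  assume "e \<in> set es"
  then obtain j where j: "j < length es" "es ! j = e" by (auto simp: in_set_conv_nth)
  show ?thesis
  proof (cases j)
    case 0 then show ?thesis using j mdef es_ne by (simp add: hd_conv_nth)
  next
    case (Suc i)
    then have si: "Suc i < length es" using j by simp
    have "butlast es ! i = es ! i" "i < length (butlast es)" using si by (auto simp: nth_butlast)
    then have "es ! i \<in> set (butlast es)" by (metis nth_mem)
    then have "fst (hd' (es ! i)) \<in> P" unfolding Pdef by simp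
    moreover have "fst (hd' (es ! i)) = fst (tl' e)" using es_link[OF si] j Suc by simp
    ultimately show ?thesis by simp
  qed
qed

lemma new_distinct: "a1 \<noteq> b1" "a1 \<noteq> a2" "a1 \<noteq> b2" "b1 \<noteq> a2" "b1 \<noteq> b2" "a2 \<noteq> b2"
  using dist by auto

lemma tail'_cases: "e \<in> E \<Longrightarrow> (e = z1 \<and> sd_tail D' e = (b1, 0)) \<or> (e = z2 \<and> sd_tail D' e = (b2, 0))
   \<or> (e \<noteq> z1 \<and> e \<noteq> z2 \<and> sd_tail D' e = tl' e)"
  using tail'_new tail'_old by blast
lemma head'_cases: "e \<in> E \<Longrightarrow> (e = x1 \<and> sd_head D' e = (a1, 0)) \<or> (e = x2 \<and> sd_head D' e = (a2, 0))
   \<or> (e \<noteq> x1 \<and> e \<noteq> x2 \<and> sd_head D' e = hd' e)"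
  using head'_new head'_old by blast

lemma wfD': "wf D'"
proof -
  have fin: "finite (sd_verts D')" "finite (sd_edges D')" using wfD unfolding wf_def by (auto simp: D'_simps)
  have ne: "sd_verts D' \<noteq> {}" by (simp add: D'_simps)
  have zE: "z1 \<in> sd_edges D'" "z2 \<in> sd_edges D'" using z1 z2 z_notin by (auto simp: D'_simps)
  have xE: "x1 \<in> sd_edges D'" "x2 \<in> sd_edges D'" using x1 x2 x_notin by (auto simp: D'_simps)
  have Eold: "e \<in> sd_edges D' \<Longrightarrow> e \<noteq> f1 \<Longrightarrow> e \<noteq> f2 \<Longrightarrow> e \<in> E \<and> e \<notin> set es" for e
    by (auto simp: D'_simps)
  have ends: "fst (sd_tail D' e) \<in> sd_verts D' \<and> fst (sd_head D' e) \<in> sd_verts D'" if eE: "e \<in> sd_edges D'" for e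
  proof (cases "e = f1 \<or> e = f2")
    case True then show ?thesis using tail'_new head'_new by (auto simp: D'_simps)
  next
    case False
    then have e: "e \<in> E" "e \<notin> set es" using Eold eE by auto
    have t: "fst (sd_tail D' e) \<in> sd_verts D'"
    proof (cases "e = z1 \<or> e = z2")
      case True then show ?thesis using tail'_new by (auto simp: D'_simps)
    next
      case False
      then show ?thesis using tail'_old[of e] e tail_not_removed[of e] wfD_parts(1)[of e]
        by (auto simp: D'_simps)
    qed
    have h: "fst (sd_head D' e) \<in> sd_verts D'"
    proof (cases "e = x1 \<or> e = x2")
      case True then show ?thesis using head'_new by (auto simp: D'_simps)
    next
      case False
      then show ?thesis using head'_old[of e] e head_not_removed[of e] wfD_parts(2)[of e]
        by (auto simp: D'_simps)
    qed
    show ?thesis using t h by simp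
  qed
  have ps: "snd (sd_tail D' e) \<le> 1 \<and> (sd_kind D' (fst (sd_tail D' e)) \<noteq> Split \<longrightarrow> snd (sd_tail D' e) = 0)
          \<and> snd (sd_head D' e) \<le> 1 \<and> (sd_kind D' (fst (sd_head D' e)) \<noteq> Merge \<longrightarrow> snd (sd_head D' e) = 0)"
    if eE: "e \<in> sd_edges D'" for e
  proof (cases "e = f1 \<or> e = f2")
    case True then show ?thesis using tail'_new head'_new by auto
  next
    case False
    then have e: "e \<in> E" "e \<notin> set es" using Eold eE by auto
    have t: "snd (sd_tail D' e) \<le> 1 \<and> (sd_kind D' (fst (sd_tail D' e)) \<noteq> Split \<longrightarrow> snd (sd_tail D' e) = 0)"
      using tail'_cases[OF e(1)] wfD_parts(1,3,4)[OF e(1)] kind'_old by auto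
    have h: "snd (sd_head D' e) \<le> 1 \<and> (sd_kind D' (fst (sd_head D' e)) \<noteq> Merge \<longrightarrow> snd (sd_head D' e) = 0)"
      using head'_cases[OF e(1)] wfD_parts(2,5,6)[OF e(1)] kind'_old by auto
    show ?thesis using t h by simp
  qed
  have injt: "inj_on (sd_tail D') (sd_edges D')"
  proof (rule inj_onI)
    fix e1 e2 assume e1: "e1 \<in> sd_edges D'" and e2: "e2 \<in> sd_edges D'" and eq: "sd_tail D' e1 = sd_tail D' e2"
    have cls: "(e = f1 \<and> sd_tail D' e = (a1, 0)) \<or> (e = f2 \<and> sd_tail D' e = (a2, 0))
        \<or> (e = z1 \<and> sd_tail D' e = (b1, 0)) \<or> (e = z2 \<and> sd_tail D' e = (b2, 0))
        \<or> (e \<in> E \<and> e \<noteq> z1 \<and> e \<noteq> z2 \<and> sd_tail D' e = tl' e)" if "e \<in> sd_edges D'" for e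
      using that tail'_new Eold tail'_cases by metis
    have inj: "inj_on tl' E" by (rule wfD_parts)
    have iE: "\<forall>x\<in>E. \<forall>y\<in>E. tl' x = tl' y \<longrightarrow> x = y" using inj unfolding inj_on_def by blast
    have nn: "x \<in> E \<Longrightarrow> tl' x \<noteq> (a1, 0) \<and> tl' x \<noteq> (a2, 0) \<and> tl' x \<noteq> (b1, 0) \<and> tl' x \<noteq> (b2, 0)" for x
      using wfD_parts(1)[of x] new_notV by (cases "tl' x") auto
    note d = new_distinct new_distinct[symmetric]
    from cls[OF e1] cls[OF e2] show "e1 = e2"
    proof (elim disjE)
    qed (use eq d nn iE in auto)
  qed
  have injh: "inj_on (sd_head D') (sd_edges D')"
  proof (rule inj_onI)
    fix e1 e2 assume e1: "e1 \<in> sd_edges D'" and e2: "e2 \<in> sd_edges D'" and eq: "sd_head D' e1 = sd_head D' e2"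
    have cls: "(e = f1 \<and> sd_head D' e = (b1, 0)) \<or> (e = f2 \<and> sd_head D' e = (b2, 0))
        \<or> (e = x1 \<and> sd_head D' e = (a1, 0)) \<or> (e = x2 \<and> sd_head D' e = (a2, 0))
        \<or> (e \<in> E \<and> e \<noteq> x1 \<and> e \<noteq> x2 \<and> sd_head D' e = hd' e)" if "e \<in> sd_edges D'" for e
      using that head'_new Eold head'_cases by metis
    have inj: "inj_on hd' E" by (rule wfD_parts)
    have iE: "\<forall>x\<in>E. \<forall>y\<in>E. hd' x = hd' y \<longrightarrow> x = y" using inj unfolding inj_on_def by blast
    have nn: "x \<in> E \<Longrightarrow> hd' x \<noteq> (a1, 0) \<and> hd' x \<noteq> (a2, 0) \<and> hd' x \<noteq> (b1, 0) \<and> hd' x \<noteq> (b2, 0)" for x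
      using wfD_parts(2)[of x] new_notV by (cases "hd' x") auto
    note d = new_distinct new_distinct[symmetric]
    from cls[OF e1] cls[OF e2] show "e1 = e2"
    proof (elim disjE)
    qed (use eq d nn iE in auto)
  qed
  have out: "\<exists>e\<in>sd_edges D'. fst (sd_tail D' e) = v" if vV: "v \<in> sd_verts D'" for v
  proof -
    consider "v = a1" | "v = a2" | "v = b1" | "v = b2" | "v \<in> V" "v \<notin> {m, s} \<union> P"
      using vV by (auto simp: D'_simps)
    then show ?thesis
    proof cases
      case 1 then show ?thesis using tail'_new by (intro bexI[of _ f1]) (auto simp: D'_simps)
    next
      case 2 then show ?thesis using tail'_new by (intro bexI[of _ f2]) (auto simp: D'_simps)
    next
      case 3 then show ?thesis using tail'_new zE by (intro bexI[of _ z1]) auto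
    next
      case 4 then show ?thesis using tail'_new zE by (intro bexI[of _ z2]) auto
    next
      case 5
      then obtain e where e: "e \<in> E" "fst (tl' e) = v" using wfD unfolding wf_def by blast
      have "e \<notin> set es" using es_tail_removed 5 e by blast
      moreover have "e \<noteq> z1" "e \<noteq> z2" using e z1 z2 5 by auto
      ultimately show ?thesis using e tail'_old[of e] by (intro bexI[of _ e]) (auto simp: D'_simps)
    qed
  qed
  show ?thesis unfolding wf_def using fin ne ends ps injt injh out by blast
qed

end

context rI
begin

definition ex :: "eid \<times> real \<Rightarrow> (eid \<times> real) list" where
  "ex p = (if fst p = f1 then map (\<lambda>e. (e, snd p / 2)) es
           else if fst p = f2 then map (\<lambda>e. (e, (snd p + 1) / 2)) es else [p])"

lemma es_chain: "successively (\<lambda>p q. stq D p q) (map (\<lambda>e. (e, c)) es)"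
proof -
  have "stp D (es ! i) c (es ! Suc i) c" if i: "Suc i < length es" for i
  proof -
    note l = es_link[OF i]
    have "es ! i \<in> E" "es ! Suc i \<in> E" using i es_nth_E by auto
    then show ?thesis using l unfolding stp_def by auto
  qed
  then show ?thesis by (simp add: successively_map successively_conv_nth)
qed

lemma traj_ex:
  assumes "fst p \<in> sd_edges D'" "0 \<le> snd p" "snd p < 1"
  shows "traj D (ex p)"
proof -
  have tf: "traj D (map (\<lambda>e. (e, c)) es)" if "0 \<le> c" "c < 1" for c
    using that es_chain es_ne es_sub unfolding traj_def by auto
  show ?thesis
  proof (cases "fst p = f1 \<or> fst p = f2")
    case True then show ?thesis using tf assms unfolding ex_def by auto
  next
    case False
    then have "fst p \<in> E" using assms by (auto simp: D'_simps)
    then show ?thesis using False assms unfolding ex_def traj_def by auto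
  qed
qed

lemma ex_ne: "ex p \<noteq> []" using es_ne unfolding ex_def by auto

lemma rs_ex: "rs D (ex p) = sd_red D' (fst p)" and bs_ex: "bs D (ex p) = sd_blue D' (fst p)"
  unfolding ex_def rs_def bs_def using f12 by (auto simp: D'_simps rydef bbdef comp_def)

lemma step_map:
  assumes st: "stp D' e t e' t'"
  shows "stq D (last (ex (e, t))) (hd (ex (e', t')))"
proof -
  define v where "v = fst (sd_head D' e)"
  have st': "e \<in> sd_edges D'" "e' \<in> sd_edges D'" "v = fst (sd_tail D' e')" "v \<in> sd_verts D'"
     "sd_kind D' v = Pass \<longrightarrow> t' = t"
    using st unfolding stp_def v_def by auto
  have Eold: "x \<in> sd_edges D' \<Longrightarrow> x \<noteq> f1 \<Longrightarrow> x \<noteq> f2 \<Longrightarrow> x \<in> E \<and> x \<notin> set es" for x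
    by (auto simp: D'_simps)
  have hE: "hd es \<in> E" "last es \<in> E" using es_ne es_sub by auto
  have ports_es: "snd (tl' (hd es)) = 0" "snd (hd' (last es)) = 0" using es_ports es_ne by auto
  note d = new_distinct new_distinct[symmetric]
  have nn: "x \<in> E \<Longrightarrow> fst (tl' x) \<noteq> a1 \<and> fst (tl' x) \<noteq> a2 \<and> fst (tl' x) \<noteq> b1 \<and> fst (tl' x) \<noteq> b2
        \<and> fst (hd' x) \<noteq> a1 \<and> fst (hd' x) \<noteq> a2 \<and> fst (hd' x) \<noteq> b1 \<and> fst (hd' x) \<noteq> b2" for x
    using wfD_parts(1,2)[of x] new_notV by metis
  consider "e = f1" | "e = f2" | "e \<noteq> f1" "e \<noteq> f2" "e' = f1" | "e \<noteq> f1" "e \<noteq> f2" "e' = f2"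
    | "e \<noteq> f1" "e \<noteq> f2" "e' \<noteq> f1" "e' \<noteq> f2" by blast
  then show ?thesis
  proof cases
    case 1
    then have vb: "v = b1" using head'_new v_def by simp
    have "e' = z1"
    proof (cases "e' = f1 \<or> e' = f2")
      case True then show ?thesis using st'(3) vb tail'_new d by auto
    next
      case False
      then have "e' \<in> E" using Eold st'(2) by blast
      then show ?thesis using tail'_cases[of e'] st'(3) vb d nn[OF \<open>e' \<in> E\<close>] by force
    qed
    moreover have "t' = t" using st'(5) vb kind'_new by simp
    ultimately have "ex (e', t') = [(z1, t)]" using fz unfolding ex_def by auto
    moreover have "last (ex (e, t)) = (last es, t / 2)" using 1 es_ne unfolding ex_def by (simp add: last_map)
    moreover have "stp D (last es) (t / 2) z1 t"
      unfolding stp_def using hE z1 sdef s_V s_k by auto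
    ultimately show ?thesis by simp
  next
    case 2
    then have vb: "v = b2" using head'_new v_def fz f12 by simp
    have "e' = z2"
    proof (cases "e' = f1 \<or> e' = f2")
      case True then show ?thesis using st'(3) vb tail'_new d by auto
    next
      case False
      then have "e' \<in> E" using Eold st'(2) by blast
      then show ?thesis using tail'_cases[of e'] st'(3) vb d nn[OF \<open>e' \<in> E\<close>] by force
    qed
    moreover have "t' = t" using st'(5) vb kind'_new by simp
    ultimately have "ex (e', t') = [(z2, t)]" using fz unfolding ex_def by auto
    moreover have "last (ex (e, t)) = (last es, (t + 1) / 2)" using 2 f12 es_ne unfolding ex_def by (simp add: last_map)
    moreover have "stp D (last es) ((t + 1) / 2) z2 t"
      unfolding stp_def using hE z2 sdef s_V s_k by auto
    ultimately show ?thesis by simp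
  next
    case 3
    then have va: "v = a1" using tail'_new st'(3) by simp
    have eE: "e \<in> E" using Eold st'(1) 3 by blast
    have "e = x1" using head'_cases[OF eE] va v_def d nn[OF eE] by auto
    moreover have "t' = t" using st'(5) va kind'_new by simp
    ultimately have "ex (e, t) = [(x1, t)]" using fz unfolding ex_def by auto
    moreover have "hd (ex (e', t')) = (hd es, t / 2)" using 3 es_ne \<open>t' = t\<close> unfolding ex_def by (simp add: hd_map)
    moreover have "stp D x1 t (hd es) (t / 2)"
      unfolding stp_def using hE x1 mdef m_V m_k by auto
    ultimately show ?thesis by simp
  next
    case 4
    then have va: "v = a2" using tail'_new st'(3) f12 by simp
    have eE: "e \<in> E" using Eold st'(1) 4 by blast
    have "e = x2" using head'_cases[OF eE] va v_def d nn[OF eE] by auto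
    moreover have "t' = t" using st'(5) va kind'_new by simp
    ultimately have "ex (e, t) = [(x2, t)]" using fz unfolding ex_def by auto
    moreover have "hd (ex (e', t')) = (hd es, (t + 1) / 2)" using 4 f12 es_ne \<open>t' = t\<close> unfolding ex_def by (simp add: hd_map)
    moreover have "stp D x2 t (hd es) ((t + 1) / 2)"
      unfolding stp_def using hE x2 mdef m_V m_k by auto
    ultimately show ?thesis by simp
  next
    case 5
    have eE: "e \<in> E" using Eold st'(1) 5 by blast
    have e'E: "e' \<in> E" using Eold st'(2) 5 by blast
    have nx: "e \<noteq> x1 \<and> e \<noteq> x2"
    proof (rule ccontr)
      assume "\<not> (e \<noteq> x1 \<and> e \<noteq> x2)"
      then have "v = a1 \<or> v = a2" using head'_new v_def by auto
      then show False using tail'_cases[OF e'E] st'(3) d nn[OF e'E] by auto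
    qed
    then have hv: "sd_head D' e = hd' e" using head'_old eE by simp
    have nz: "e' \<noteq> z1 \<and> e' \<noteq> z2"
    proof (rule ccontr)
      assume "\<not> (e' \<noteq> z1 \<and> e' \<noteq> z2)"
      then have "v = b1 \<or> v = b2" using tail'_new st'(3) by auto
      then show False using hv v_def nn[OF eE] by auto
    qed
    then have tv: "sd_tail D' e' = tl' e'" using tail'_old e'E by simp
    have vV: "v \<in> V" using hv v_def wfD_parts(2)[OF eE] by simp
    have "stp D e t e' t'"
      using st unfolding stp_def using hv tv v_def vV kind'_old[OF vV] eE e'E by auto
    moreover have "ex (e, t) = [(e, t)]" "ex (e', t') = [(e', t')]" using 5 unfolding ex_def by auto
    ultimately show ?thesis by simp
  qed
qed

lemma rs_concat: "rs D (concat xs) = sum_list (map (rs D) xs)"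
  by (induction xs) (auto simp: rs_def)
lemma bs_concat: "bs D (concat xs) = sum_list (map (bs D) xs)"
  by (induction xs) (auto simp: bs_def)

lemma len_concat_ex: "length ss \<le> length (concat (map ex ss))"
proof (induction ss)
  case Nil then show ?case by simp
next
  case (Cons p ss)
  have "1 \<le> length (ex p)" using ex_ne[of p] by (cases "ex p") auto
  then show ?case using Cons by simp
qed

lemma traj_back:
  assumes "traj D' ss"
  shows "\<exists>ss0. traj D ss0 \<and> rs D ss0 = rs D' ss \<and> bs D ss0 = bs D' ss \<and> length ss \<le> length ss0"
proof (intro exI conjI)
  let ?c = "concat (map ex ss)"
  have a: "ss \<noteq> []" "\<forall>p\<in>set ss. fst p \<in> sd_edges D' \<and> 0 \<le> snd p \<and> snd p < 1" "successively (stq D') ss"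
    using assms unfolding traj_def by auto
  have "successively (\<lambda>p q. stq D (last (ex p)) (hd (ex q))) ss"
    by (rule successively_mono[OF a(3)]) (metis step_map prod.collapse)
  then show "traj D ?c" using traj_concat[of ss D ex] a traj_ex by auto
  show "rs D ?c = rs D' ss" unfolding rs_concat map_map comp_def rs_ex by (simp add: rs_def)
  show "bs D ?c = bs D' ss" unfolding bs_concat map_map comp_def bs_ex by (simp add: bs_def)
  show "length ss \<le> length ?c" by (rule len_concat_ex)
qed

end

lemma ruleI_pres:
  assumes "ruleI D D'" "wf D"
  shows "wf D' \<and> (\<forall>ss. traj D' ss \<longrightarrow> (\<exists>ss0. traj D ss0 \<and> rs D ss0 = rs D' ss \<and> bs D ss0 = bs D' ss \<and> length ss \<le> length ss0))"
  using assms(1)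
proof (cases rule: ruleI.cases)
  case (1 es m s P x1 x2 z1 z2 a1 b1 a2 b2 f1 f2 ry bb)
  interpret rI D es m s P x1 x2 z1 z2 a1 b1 a2 b2 f1 f2 ry bb D'
    using 1 assms(2) by unfold_locales auto
  show ?thesis using wfD' traj_back by blast
qed

definition inv1 :: "(real \<Rightarrow> real) \<Rightarrow> sd \<Rightarrow> bool" where
  "inv1 g D \<longleftrightarrow> (\<forall>ss. traj D ss \<longrightarrow> \<bar>(g ^^ rs D ss) 0 - real (bs D ss)\<bar> \<le> 4)"
definition inv2 :: "sd \<Rightarrow> bool" where
  "inv2 D \<longleftrightarrow> (\<exists>K. \<forall>ss. traj D ss \<longrightarrow> rs D ss = 0 \<longrightarrow> length ss \<le> K)"

lemma reach_pres:
  assumes "ruleI\<^sup>*\<^sup>* D0 D" "wf D0" "inv1 g D0" "inv2 D0"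
  shows "wf D \<and> inv1 g D \<and> inv2 D"
  using assms
proof (induction rule: rtranclp_induct)
  case base then show ?case by simp
next
  case (step D D')
  then have w: "wf D" "inv1 g D" "inv2 D" by auto
  note p = ruleI_pres[OF step.hyps(2) w(1)]
  have i1: "inv1 g D'" unfolding inv1_def
  proof (intro allI impI)
    fix ss assume "traj D' ss"
    then obtain ss0 where "traj D ss0" "rs D ss0 = rs D' ss" "bs D ss0 = bs D' ss" using p by blast
    then show "\<bar>(g ^^ rs D' ss) 0 - real (bs D' ss)\<bar> \<le> 4" using w(2) unfolding inv1_def by metis
  qed
  obtain K where K: "\<forall>ss. traj D ss \<longrightarrow> rs D ss = 0 \<longrightarrow> length ss \<le> K" using w(3) unfolding inv2_def by blast
  have i2: "inv2 D'" unfolding inv2_def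
  proof (intro exI[of _ K] allI impI)
    fix ss assume "traj D' ss" "rs D' ss = 0"
    then obtain ss0 where "traj D ss0" "rs D ss0 = 0" "length ss \<le> length ss0" using p by metis
    then show "length ss \<le> K" using K by fastforce
  qed
  show ?case using p i1 i2 by blast
qed

lemma window_inj:
  fixes r1 r2 L :: nat
  assumes "r1 mod L = r2 mod L" "r1 \<le> r2" "r2 < r1 + L"
  shows "r1 = r2"
proof -
  have "L dvd r2 - r1" using assms mod_eq_dvd_iff_nat[of r1 r2 L] by simp
  moreover have "r2 - r1 < L" using assms by simp
  ultimately show ?thesis using assms(2) by (metis diff_is_0_eq' dvd_imp_le le_antisym not_less zero_less_diff)
qed

locale cyc =
  fixes D :: sd and cs :: "eid list"
  assumes wfD: "wf D" and cyc: "is_cycle D cs" and red: "\<not> (\<exists>es. ms_strand D es)"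
begin

abbreviation "L \<equiv> length cs"
definition c :: "nat \<Rightarrow> eid" where "c j = cs ! (j mod L)"
abbreviation "hv j \<equiv> fst (sd_head D (c j))"
abbreviation "hk j \<equiv> sd_kind D (hv j)"

lemma Lpos: "0 < L" using cyc unfolding is_cycle_def by simp
lemma cE: "c j \<in> sd_edges D"
  using cyc Lpos unfolding is_cycle_def c_def by auto
lemma clink: "hv j = fst (sd_tail D (c (Suc j)))"
proof -
  have "j mod L < L" using Lpos by simp
  then have "fst (sd_head D (cs ! (j mod L))) = fst (sd_tail D (cs ! ((j mod L + 1) mod L)))"
    using cyc unfolding is_cycle_def by blast
  then show ?thesis unfolding c_def by (simp add: mod_Suc_eq)
qed
lemma hvV: "hv j \<in> sd_verts D" using cE wfD unfolding wf_def by blast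
lemma tvV: "fst (sd_tail D (c j)) \<in> sd_verts D" using cE wfD unfolding wf_def by blast
lemma dcs: "distinct cs" using cyc unfolding is_cycle_def by (auto simp: distinct_map)
lemma c_period: "c (j + L) = c j" unfolding c_def by simp
lemma c_period': "c (j + i * L) = c j" unfolding c_def by simp

lemma c_window: "c r1 = c r2 \<Longrightarrow> r1 \<le> r2 \<Longrightarrow> r2 < r1 + L \<Longrightarrow> r1 = r2"
proof -
  assume a: "c r1 = c r2" "r1 \<le> r2" "r2 < r1 + L"
  have "r1 mod L = r2 mod L" using a(1) dcs Lpos unfolding c_def by (simp add: nth_eq_iff_index_eq)
  then show ?thesis using window_inj a by blast
qed

lemma no_split_after_merge:
  assumes m: "hk i0 = Merge"
  shows "i0 \<le> j \<Longrightarrow> hk j \<noteq> Split"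
proof (induction j rule: less_induct)
  case (less j)
  show ?case
  proof (cases "j = i0")
    case True then show ?thesis using m by simp
  next
    case False
    then have ij: "i0 < j" using less.prems by simp
    define Q where "Q = {q. i0 \<le> q \<and> q < j \<and> hk q \<noteq> Pass}"
    have Qf: "finite Q" unfolding Q_def by simp
    have Qn: "i0 \<in> Q" unfolding Q_def using ij m by simp
    define q where "q = Max Q"
    have qQ: "q \<in> Q" unfolding q_def using Qf Qn Max_in by blast
    have qmax: "\<And>r. r \<in> Q \<Longrightarrow> r \<le> q" unfolding q_def using Qf by simp
    have q1: "i0 \<le> q" "q < j" "hk q \<noteq> Pass" using qQ unfolding Q_def by auto
    have qM: "hk q = Merge" using q1 less.IH[of q] by (cases "hk q") auto
    have qL: "j \<le> q + L"
    proof (rule ccontr)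
      assume "\<not> j \<le> q + L"
      then have jq: "q + L < j" by simp
      define r where "r = i0 + ((j - 1 - i0) div L) * L"
      have "(j - 1 - i0) div L * L \<le> j - 1 - i0" by (metis div_mult_mod_eq le_add1)
      then have r1: "r \<le> j - 1" unfolding r_def using ij by linarith
      have r2: "j - 1 - i0 < (j - 1 - i0) div L * L + L"
        using Lpos by (metis add.commute div_mult_mod_eq mod_less_divisor nat_add_left_cancel_less)
      have r3: "j - 1 < r + L" unfolding r_def using r2 ij by linarith
      have "hk r = Merge" unfolding r_def using m by (simp add: c_period')
      moreover have "i0 \<le> r" "r < j" using r1 ij unfolding r_def by linarith+
      ultimately have "r \<in> Q" unfolding Q_def by simp
      then have "r \<le> q" by (rule qmax)
      then show False using r3 jq by linarith
    qed
    show ?thesis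
    proof
      assume sp: "hk j = Split"
      define es where "es = map c [Suc q..<Suc j]"
      have les: "length es = j - q" unfolding es_def using q1 by (simp del: upt_Suc)
      have esn: "\<And>i. i < length es \<Longrightarrow> es ! i = c (Suc q + i)" unfolding es_def by (simp del: upt_Suc)
      have "ms_strand D es"
        unfolding ms_strand_def
      proof (intro conjI)
        show "es \<noteq> []" using q1 unfolding es_def by simp
        show "distinct es" unfolding es_def distinct_map
        proof
          show "inj_on c (set [Suc q..<Suc j])"
          proof (rule inj_onI)
            fix r1 r2 assume "r1 \<in> set [Suc q..<Suc j]" "r2 \<in> set [Suc q..<Suc j]" "c r1 = c r2"
            then show "r1 = r2" using qL c_window[of r1 r2] c_window[of r2 r1] by (cases "r1 \<le> r2") auto
          qed
        qed simp
        show "set es \<subseteq> sd_edges D" unfolding es_def using cE by auto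
        have "es \<noteq> []" using les q1 by auto
        then have hd: "hd es = c (Suc q)" using esn[of 0] les q1 by (simp add: hd_conv_nth)
        have lt: "last es = c j" using esn[of "length es - 1"] les q1 es_def by (simp add: last_conv_nth)
        show "fst (sd_tail D (hd es)) \<in> sd_verts D" using hd tvV by simp
        show "sd_kind D (fst (sd_tail D (hd es))) = Merge" using hd clink[of q] qM by simp
        show "fst (sd_head D (last es)) \<in> sd_verts D" using lt hvV by simp
        show "sd_kind D (fst (sd_head D (last es))) = Split" using lt sp by simp
        show "\<forall>i. Suc i < length es \<longrightarrow> fst (sd_head D (es ! i)) = fst (sd_tail D (es ! Suc i)) \<and>
              fst (sd_head D (es ! i)) \<in> sd_verts D \<and> sd_kind D (fst (sd_head D (es ! i))) = Pass"
        proof (intro allI impI)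
        fix i assume i: "Suc i < length es"
        have e1: "es ! i = c (Suc q + i)" "es ! Suc i = c (Suc (Suc q + i))" using esn i by auto
        have r: "Suc q + i < j" using i les by simp
        have np: "hk (Suc q + i) = Pass"
        proof (rule ccontr)
          assume "hk (Suc q + i) \<noteq> Pass"
          then have "Suc q + i \<in> Q" unfolding Q_def using r q1 by simp
          then show False using qmax by fastforce
        qed
        show "fst (sd_head D (es ! i)) = fst (sd_tail D (es ! Suc i)) \<and>
              fst (sd_head D (es ! i)) \<in> sd_verts D \<and> sd_kind D (fst (sd_head D (es ! i))) = Pass"
          using e1 clink[of "Suc q + i"] hvV[of "Suc q + i"] np by simp
        qed
      qed
      then show False using red by blast
    qed
  qed
qed

lemma merge_no_split:
  assumes "hk i0 = Merge"
  shows "hk j \<noteq> Split"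
proof -
  have "1 \<le> L" using Lpos by linarith
  then have "i0 * 1 \<le> i0 * L" by (rule mult_le_mono2)
  then have "i0 \<le> i0 * L" by (metis mult.right_neutral)
  then have "i0 \<le> j + i0 * L" by linarith
  then have "hk (j + i0 * L) \<noteq> Split"
    using no_split_after_merge[OF assms] by blast
  then show ?thesis by (simp add: c_period')
qed

end

lemma rot_lim:
  fixes g :: "real \<Rightarrow> real" and a b :: nat and C :: real
  assumes b: "b \<ge> 1" and lap: "\<And>m. \<bar>(g ^^ (m * b)) 0 - real (m * a)\<bar> \<le> C"
    and disp: "\<And>N x. \<bar>(g ^^ N) x - x\<bar> \<le> 2 * real N"
  shows "(\<lambda>N. (g ^^ N) 0 / real N) \<longlonglongrightarrow> real a / real b"
proof -
  define K where "K = C + 2 * real b + real a"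
  have bound: "\<bar>(g ^^ N) 0 - real N * (real a / real b)\<bar> \<le> K" for N
  proof -
    define m where "m = N div b"
    define r where "r = N mod b"
    have N: "N = r + m * b" unfolding m_def r_def by simp
    have rb: "r < b" unfolding r_def using b by simp
    have "(g ^^ N) 0 = (g ^^ r) ((g ^^ (m * b)) 0)" unfolding N by (simp add: funpow_add)
    then have e1: "\<bar>(g ^^ N) 0 - (g ^^ (m * b)) 0\<bar> \<le> 2 * real r" using disp[of r "(g ^^ (m * b)) 0"] by simp
    have e2: "\<bar>(g ^^ (m * b)) 0 - real (m * a)\<bar> \<le> C" by (rule lap)
    have bp: "0 < real b" using b by simp
    have rN: "real N = real r + real m * real b" unfolding N by simp
    have "real N * (real a / real b) = real r * real a / real b + real m * real a"
      unfolding rN using bp by (simp add: divide_simps distrib_right)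
    then have eqN: "real N * (real a / real b) = real (m * a) + real r * real a / real b" by simp
    have "real r * real a \<le> real b * real a" using rb by (intro mult_right_mono) auto
    then have le1: "real r * real a / real b \<le> real a" using bp by (simp add: pos_divide_le_eq mult.commute)
    have ge0: "0 \<le> real r * real a / real b" using bp by simp
    have "2 * real r \<le> 2 * real b" using rb by simp
    note eqN le1 ge0 this
    moreover have "(g ^^ N) 0 - (g ^^ (m * b)) 0 \<le> 2 * real r" "(g ^^ (m * b)) 0 - (g ^^ N) 0 \<le> 2 * real r"
      using e1 by (auto simp: abs_le_iff)
    moreover have "(g ^^ (m * b)) 0 - real (m * a) \<le> C" "real (m * a) - (g ^^ (m * b)) 0 \<le> C"
      using e2 by (auto simp: abs_le_iff)
    ultimately show ?thesis using eqN le1 ge0 unfolding K_def abs_le_iff by (intro conjI; linarith)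
  qed
  have ev1: "\<forall>\<^sub>F N in sequentially. real a / real b - K / real N \<le> (g ^^ N) 0 / real N"
  proof (rule eventually_sequentiallyI[of 1])
    fix N :: nat assume "1 \<le> N"
    then have Np: "0 < real N" by simp
    have "real N * (real a / real b) - K \<le> (g ^^ N) 0" using bound[of N] by (simp add: abs_le_iff)
    then have "(real N * (real a / real b) - K) / real N \<le> (g ^^ N) 0 / real N"
      using Np by (intro divide_right_mono) auto
    moreover have "(real N * (real a / real b) - K) / real N = real a / real b - K / real N"
      using Np by (simp add: diff_divide_distrib)
    ultimately show "real a / real b - K / real N \<le> (g ^^ N) 0 / real N" by simp
  qed
  have ev2: "\<forall>\<^sub>F N in sequentially. (g ^^ N) 0 / real N \<le> real a / real b + K / real N"
  proof (rule eventually_sequentiallyI[of 1])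
    fix N :: nat assume "1 \<le> N"
    then have Np: "0 < real N" by simp
    have "(g ^^ N) 0 \<le> real N * (real a / real b) + K" using bound[of N] by (simp add: abs_le_iff)
    then have "(g ^^ N) 0 / real N \<le> (real N * (real a / real b) + K) / real N"
      using Np by (intro divide_right_mono) auto
    moreover have "(real N * (real a / real b) + K) / real N = real a / real b + K / real N"
      using Np by (simp add: add_divide_distrib)
    ultimately show "(g ^^ N) 0 / real N \<le> real a / real b + K / real N" by simp
  qed
  have l1: "(\<lambda>N. real a / real b - K / real N) \<longlonglongrightarrow> real a / real b"
    using tendsto_diff[OF tendsto_const lim_const_over_n[of K]] by simp
  have l2: "(\<lambda>N. real a / real b + K / real N) \<longlonglongrightarrow> real a / real b"
    using tendsto_add[OF tendsto_const lim_const_over_n[of K]] by simp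
  show ?thesis by (rule tendsto_sandwich[OF ev1 ev2 l1 l2])
qed

lemma sum_period:
  fixes f :: "eid \<Rightarrow> nat" and cs :: "eid list"
  assumes "cs \<noteq> []"
  shows "sum_list (map (\<lambda>j. f (cs ! (j mod length cs))) [0..<m * length cs]) = m * sum_list (map f cs)"
proof (induction m)
  case 0 then show ?case by simp
next
  case (Suc m)
  let ?L = "length cs"
  have sm: "Suc m * ?L = m * ?L + ?L" by simp
  have sp: "[0..<Suc m * ?L] = [0..<m * ?L] @ [m * ?L..<m * ?L + ?L]"
    unfolding sm by (rule upt_add_eq_append) simp
  have "map (\<lambda>j. f (cs ! (j mod ?L))) [m * ?L..<m * ?L + ?L] = map f cs"
  proof (rule nth_equalityI)
    fix i assume "i < length (map (\<lambda>j. f (cs ! (j mod ?L))) [m * ?L..<m * ?L + ?L])"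
    then have i: "i < ?L" by simp
    have md: "(m * ?L + i) mod ?L = i" using i by simp
    have "[m * ?L..<m * ?L + ?L] ! i = m * ?L + i" using i by simp
    then show "map (\<lambda>j. f (cs ! (j mod ?L))) [m * ?L..<m * ?L + ?L] ! i = map f cs ! i"
      using i md by simp
  qed simp
  note eqs = sp this
  show ?case using Suc eqs by simp
qed

context cyc
begin

primrec fw :: "nat \<Rightarrow> real" where
  "fw 0 = 0"
| "fw (Suc j) = (if hk j = Merge then (fw j + real (snd (sd_head D (c j)))) / 2 else fw j)"

primrec bw :: "nat \<Rightarrow> nat \<Rightarrow> real" where
  "bw i 0 = 0"
| "bw i (Suc d) = (if hk i = Split then (bw (Suc i) d + real (snd (sd_tail D (c (Suc i))))) / 2 else bw (Suc i) d)"

lemma hport: "snd (sd_head D (c j)) \<le> 1" using cE wfD unfolding wf_def by blast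
lemma tport: "snd (sd_tail D (c j)) \<le> 1" using cE wfD unfolding wf_def by blast

lemma fw_bounds: "0 \<le> fw j \<and> fw j < 1"
proof (induction j)
  case 0 then show ?case by simp
next
  case (Suc j)
  have "real (snd (sd_head D (c j))) \<le> 1" using hport[of j] by simp
  then show ?case using Suc by auto
qed

lemma bw_bounds: "0 \<le> bw i d \<and> bw i d < 1"
proof (induction d arbitrary: i)
  case 0 then show ?case by simp
next
  case (Suc d)
  have "real (snd (sd_tail D (c (Suc i)))) \<le> 1" using tport[of "Suc i"] by simp
  then show ?case using Suc[of "Suc i"] by auto
qed

lemma traj_seq:
  assumes "0 < N" "\<And>j. j < N \<Longrightarrow> 0 \<le> t j \<and> t j < 1"
    "\<And>j. Suc j < N \<Longrightarrow> stp D (c j) (t j) (c (Suc j)) (t (Suc j))"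
  shows "traj D (map (\<lambda>j. (c j, t j)) [0..<N])"
  unfolding traj_def using assms cE
  by (auto simp: successively_map successively_conv_nth)

lemma rs_seq: "rs D (map (\<lambda>j. (c j, t j)) [0..<m * L]) = m * cycle_red D cs"
  unfolding rs_def cycle_red_def map_map comp_def c_def
  using sum_period[of cs "sd_red D" m] Lpos by simp
lemma bs_seq: "bs D (map (\<lambda>j. (c j, t j)) [0..<m * L]) = m * cycle_blue D cs"
  unfolding bs_def cycle_blue_def map_map comp_def c_def
  using sum_period[of cs "sd_blue D" m] Lpos by simp

lemma laps:
  assumes "1 \<le> m"
  shows "\<exists>ss. traj D ss \<and> rs D ss = m * cycle_red D cs \<and> bs D ss = m * cycle_blue D cs \<and> length ss = m * L"
proof -
  let ?N = "m * L"
  have Np: "0 < ?N" using assms Lpos by simp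
  show ?thesis
  proof (cases "\<exists>i0. hk i0 = Merge")
    case True
    then obtain i0 where i0: "hk i0 = Merge" by blast
    have ns: "\<And>j. hk j \<noteq> Split" using merge_no_split[OF i0] .
    have st: "stp D (c j) (fw j) (c (Suc j)) (fw (Suc j))" for j
      unfolding stp_def using cE clink hvV ns[of j] by auto
    show ?thesis
      using traj_seq[of ?N fw, OF Np fw_bounds st] rs_seq bs_seq by (intro exI) auto
  next
    case False
    then have nm: "\<And>j. hk j \<noteq> Merge" by blast
    define t where "t j = bw j (?N - 1 - j)" for j
    have tb: "0 \<le> t j \<and> t j < 1" for j unfolding t_def using bw_bounds .
    have st: "stp D (c j) (t j) (c (Suc j)) (t (Suc j))" if j: "Suc j < ?N" for j
    proof -
      have "?N - 1 - j = Suc (?N - 1 - Suc j)" using j by simp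
      then have tj: "t j = (if hk j = Split then (t (Suc j) + real (snd (sd_tail D (c (Suc j))))) / 2 else t (Suc j))"
        unfolding t_def by simp
      show ?thesis unfolding stp_def using cE clink hvV nm[of j] tj by auto
    qed
    show ?thesis
      using traj_seq[of ?N t, OF Np tb st] rs_seq bs_seq by (intro exI) auto
  qed
qed

lemma red_pos:
  assumes "inv2 D"
  shows "1 \<le> cycle_red D cs"
proof (rule ccontr)
  assume "\<not> 1 \<le> cycle_red D cs"
  then have z: "cycle_red D cs = 0" by simp
  obtain K where K: "\<forall>ss. traj D ss \<longrightarrow> rs D ss = 0 \<longrightarrow> length ss \<le> K" using assms unfolding inv2_def by blast
  obtain ss where ss: "traj D ss" "rs D ss = (K + 1) * cycle_red D cs" "length ss = (K + 1) * L"
    using laps[of "K + 1"] by auto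
  have "1 \<le> L" using Lpos by linarith
  then have "(K + 1) * 1 \<le> (K + 1) * L" by (rule mult_le_mono2)
  then have "K + 1 \<le> (K + 1) * L" by simp
  then show False using K ss z by fastforce
qed

lemma rot:
  assumes "inv1 g D" "inv2 D" "\<And>N x. \<bar>(g ^^ N) x - x\<bar> \<le> 2 * real N"
  shows "(\<lambda>N. (g ^^ N) 0 / real N) \<longlonglongrightarrow> real (cycle_blue D cs) / real (cycle_red D cs)"
proof (rule rot_lim[where C = 4])
  show "1 \<le> cycle_red D cs" using red_pos assms(2) .
  show "\<bar>(g ^^ N) x - x\<bar> \<le> 2 * real N" for N x by (rule assms(3))
  fix m :: nat
  show "\<bar>(g ^^ (m * cycle_red D cs)) 0 - real (m * cycle_blue D cs)\<bar> \<le> 4"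
  proof (cases "m = 0")
    case True then show ?thesis by simp
  next
    case False
    then obtain ss where "traj D ss" "rs D ss = m * cycle_red D cs" "bs D ss = m * cycle_blue D cs"
      using laps[of m] by auto
    then show ?thesis using assms(1) unfolding inv1_def by metis
  qed
qed

end

lemma cycle_exists:
  assumes "wf D"
  shows "\<exists>cs. is_cycle D cs"
proof -
  have fin: "finite (sd_verts D)" and ne: "sd_verts D \<noteq> {}"
    and ends: "\<forall>e\<in>sd_edges D. fst (sd_tail D e) \<in> sd_verts D \<and> fst (sd_head D e) \<in> sd_verts D"
    and out: "\<forall>v\<in>sd_verts D. \<exists>e\<in>sd_edges D. fst (sd_tail D e) = v"
    using assms unfolding wf_def by auto
  obtain v0 where v0: "v0 \<in> sd_verts D" using ne by blast
  define nx where "nx v = (SOME e. e \<in> sd_edges D \<and> fst (sd_tail D e) = v)" for v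
  have nx: "v \<in> sd_verts D \<Longrightarrow> nx v \<in> sd_edges D \<and> fst (sd_tail D (nx v)) = v" for v
    unfolding nx_def using out by (metis (mono_tags, lifting) someI_ex)
  define w where "w j = ((\<lambda>v. fst (sd_head D (nx v))) ^^ j) v0" for j
  have wV: "w j \<in> sd_verts D" for j
    by (induction j) (auto simp: w_def v0 nx ends)
  have wS: "w (Suc j) = fst (sd_head D (nx (w j)))" for j unfolding w_def by simp
  have "\<not> inj_on w {0..card (sd_verts D)}"
  proof
    assume "inj_on w {0..card (sd_verts D)}"
    then have "card (w ` {0..card (sd_verts D)}) = card {0..card (sd_verts D)}" by (rule card_image)
    moreover have "card (w ` {0..card (sd_verts D)}) \<le> card (sd_verts D)"
      using wV fin by (intro card_mono) auto
    ultimately show False by simp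
  qed
  then have exj: "\<exists>j. \<exists>i<j. w i = w j" unfolding inj_on_def by (metis nat_neq_iff)
  define j0 where "j0 = (LEAST j. \<exists>i<j. w i = w j)"
  obtain i0 where i0: "i0 < j0" "w i0 = w j0" using LeastI_ex[OF exj] unfolding j0_def by blast
  have injw: "w p = w p' \<Longrightarrow> p < j0 \<Longrightarrow> p' < j0 \<Longrightarrow> p = p'" for p p'
  proof (rule ccontr)
    assume a: "w p = w p'" "p < j0" "p' < j0" "p \<noteq> p'"
    have "\<exists>i<max p p'. w i = w (max p p')"
    proof (cases "p < p'")
      case True then show ?thesis using a by (intro exI[of _ p]) (simp add: max_def)
    next
      case False then have "p' < p" using a by simp
      then show ?thesis using a by (intro exI[of _ p']) (simp add: max_def)
    qed
    then have "j0 \<le> max p p'" unfolding j0_def by (rule Least_le)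
    then show False using a by simp
  qed
  define cs where "cs = map (\<lambda>p. nx (w p)) [i0..<j0]"
  have lcs: "length cs = j0 - i0" unfolding cs_def by simp
  have csn: "t < j0 - i0 \<Longrightarrow> cs ! t = nx (w (i0 + t))" for t unfolding cs_def by simp
  have "is_cycle D cs" unfolding is_cycle_def
  proof (intro conjI allI impI)
    show "cs \<noteq> []" using i0 lcs by auto
    show "set cs \<subseteq> sd_edges D" unfolding cs_def using nx wV by auto
    have "map (\<lambda>e. fst (sd_tail D e)) cs = map w [i0..<j0]" unfolding cs_def using nx wV by simp
    moreover have "distinct (map w [i0..<j0])" unfolding distinct_map using injw by (auto intro: inj_onI)
    ultimately show "distinct (map (\<lambda>e. fst (sd_tail D e)) cs)" by simp
  next
    fix t assume t: "t < length cs"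
    have h: "fst (sd_head D (cs ! t)) = w (i0 + t + 1)" using t lcs csn wS by simp
    show "fst (sd_head D (cs ! t)) = fst (sd_tail D (cs ! ((t + 1) mod length cs)))"
    proof (cases "t + 1 < length cs")
      case True
      then show ?thesis using h csn[of "t + 1"] lcs nx wV by simp
    next
      case False
      then have "t + 1 = length cs" using t by simp
      then have "i0 + t + 1 = j0" "(t + 1) mod length cs = 0" using lcs i0 by auto
      then show ?thesis using h csn[of 0] lcs i0 nx wV by simp
    qed
  qed
  then show ?thesis by blast
qed

lemma aff_nil: "aff (ivf [] 0 1) t = t" by (simp add: aff_def)

lemma aff_bounds:
  assumes "0 \<le> t" "t < 1"
  shows "0 \<le> aff (ivf w 0 1) t \<and> aff (ivf w 0 1) t < 1"
proof -
  have b: "0 \<le> fst (ivf w 0 1)" "snd (ivf w 0 1) \<le> 1" "fst (ivf w 0 1) < snd (ivf w 0 1)"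
    using ivf_bounds[of 0 1 w] by auto
  have "t * (snd (ivf w 0 1) - fst (ivf w 0 1)) < 1 * (snd (ivf w 0 1) - fst (ivf w 0 1))"
    using b assms by (intro mult_strict_right_mono) auto
  then have s1: "t * (snd (ivf w 0 1) - fst (ivf w 0 1)) < snd (ivf w 0 1) - fst (ivf w 0 1)" by simp
  have s0: "0 \<le> t * (snd (ivf w 0 1) - fst (ivf w 0 1))" using b assms by simp
  show ?thesis unfolding aff_def using b s0 s1 by (intro conjI; linarith)
qed

lemma port_real: "real (port b) = (if b then 1 else 0)" by (simp add: port_def)

context setting
begin

abbreviation "D0 \<equiv> init_sd Tm Tp k"
abbreviation "lm \<equiv> leafaddrs Tm"
abbreviation "lp \<equiv> leafaddrs Tp"
abbreviation "sg \<equiv> sigma n k"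

lemma D0_simps:
  "sd_verts D0 = VM ` nodes Tm \<union> VP ` nodes Tp"
  "sd_edges D0 = EM ` (nodes Tm - {[]}) \<union> EP ` (nodes Tp - {[]}) \<union> EJ ` {1..n} \<union> {ER}"
  "sd_kind D0 (VM w) = (if w \<in> set lm then Pass else Split)"
  "sd_kind D0 (VP w) = (if w \<in> set lp then Pass else Merge)"
  "sd_tail D0 (EM w) = (VM (butlast w), port (last w))"
  "sd_tail D0 (EP w) = (VP w, 0)"
  "sd_tail D0 (EJ i) = (VM (lm ! (i - 1)), 0)"
  "sd_tail D0 ER = (VP [], 0)"
  "sd_head D0 (EM w) = (VM w, 0)"
  "sd_head D0 (EP w) = (VP (butlast w), port (last w))"
  "sd_head D0 (EJ i) = (VP (lp ! (sg i - 1)), 0)"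
  "sd_head D0 ER = (VM [], 0)"
  "sd_red D0 e = (if e = ER then 1 else 0)"
  "sd_blue D0 (EJ i) = (if n < i + k then 1 else 0)"
  "sd_blue D0 (EM w) = 0" "sd_blue D0 (EP w) = 0" "sd_blue D0 ER = 0"
  by (simp_all add: init_sd_def Let_def nm)

lemma sg_range: "i \<in> {1..n} \<Longrightarrow> 1 \<le> sg i \<and> sg i - 1 < n \<and> sg i - 1 = (i - 1 + k) mod n"
  using kn unfolding sigma_def by (auto simp: Suc_diff_le)

lemma sg_inj: "i \<in> {1..n} \<Longrightarrow> i' \<in> {1..n} \<Longrightarrow> sg i = sg i' \<Longrightarrow> i = i'"
proof -
  assume a: "i \<in> {1..n}" "i' \<in> {1..n}" "sg i = sg i'"
  then have e: "(i - 1 + k) mod n = (i' - 1 + k) mod n" using sg_range by metis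
  show "i = i'"
  proof (cases "i \<le> i'")
    case True
    have "i - 1 + k \<le> i' - 1 + k" "i' - 1 + k < i - 1 + k + n" using a True by auto
    then have "i - 1 + k = i' - 1 + k" using window_inj[OF e] by blast
    then show ?thesis using a by auto
  next
    case False
    have "i' - 1 + k \<le> i - 1 + k" "i - 1 + k < i' - 1 + k + n" using a False by auto
    then have "i' - 1 + k = i - 1 + k" using window_inj[OF e[symmetric]] by blast
    then show ?thesis using a by auto
  qed
qed

lemma lm_nth: "i \<in> {1..n} \<Longrightarrow> lm ! (i - 1) \<in> set lm \<and> lm ! (i - 1) \<in> nodes Tm"
  using nm leaf_sub_nodes[of Tm] by (auto simp: Suc_le_eq)
lemma lp_nth: "i \<in> {1..n} \<Longrightarrow> lp ! (sg i - 1) \<in> set lp \<and> lp ! (sg i - 1) \<in> nodes Tp"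
  using np leaf_sub_nodes[of Tp] sg_range[of i] by auto

lemma E0_cases:
  assumes "e \<in> sd_edges D0"
  obtains (EM) w where "e = EM w" "w \<in> nodes Tm" "w \<noteq> []"
    | (EP) w where "e = EP w" "w \<in> nodes Tp" "w \<noteq> []"
    | (EJ) i where "e = EJ i" "i \<in> {1..n}"
    | (ER) "e = ER"
  using assms unfolding D0_simps by blast

lemma wf0: "wf D0"
proof -
  have fin: "finite (sd_verts D0)" "finite (sd_edges D0)" using finite_nodes by (auto simp: D0_simps)
  have "VM [] \<in> sd_verts D0" by (simp add: D0_simps)
  then have ne: "sd_verts D0 \<noteq> {}" by blast
  have ends: "fst (sd_tail D0 e) \<in> sd_verts D0 \<and> fst (sd_head D0 e) \<in> sd_verts D0" if "e \<in> sd_edges D0" for e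
    using that
  proof (cases rule: E0_cases)
    case (EM w) then show ?thesis using butlast_nodes[of w Tm] by (simp add: D0_simps)
  next
    case (EP w) then show ?thesis using butlast_nodes[of w Tp] by (simp add: D0_simps)
  next
    case (EJ i) then show ?thesis using lm_nth[of i] lp_nth[of i] by (simp add: D0_simps)
  next
    case ER then show ?thesis by (simp add: D0_simps)
  qed
  have ps: "snd (sd_tail D0 e) \<le> 1 \<and> (sd_kind D0 (fst (sd_tail D0 e)) \<noteq> Split \<longrightarrow> snd (sd_tail D0 e) = 0)
          \<and> snd (sd_head D0 e) \<le> 1 \<and> (sd_kind D0 (fst (sd_head D0 e)) \<noteq> Merge \<longrightarrow> snd (sd_head D0 e) = 0)"
    if "e \<in> sd_edges D0" for e
    using that
  proof (cases rule: E0_cases)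
    case (EM w) then show ?thesis using butlast_nodes[of w Tm] by (simp add: D0_simps port_def)
  next
    case (EP w) then show ?thesis using butlast_nodes[of w Tp] by (simp add: D0_simps port_def)
  next
    case (EJ i) then show ?thesis by (simp add: D0_simps)
  next
    case ER then show ?thesis by (simp add: D0_simps)
  qed
  have lastbl: "w \<noteq> [] \<Longrightarrow> w' \<noteq> [] \<Longrightarrow> butlast w = butlast w' \<Longrightarrow> last w = last w' \<Longrightarrow> w = w'" for w w' :: "bool list"
  proof -
    assume a: "w \<noteq> []" "w' \<noteq> []" "butlast w = butlast w'" "last w = last w'"
    have "w = butlast w @ [last w]" using a(1) by simp
    also have "\<dots> = butlast w' @ [last w']" using a(3,4) by simp
    also have "\<dots> = w'" using a(2) by simp
    finally show "w = w'" .
  qed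
  have portinj: "port b = port b' \<Longrightarrow> b = b'" for b b' by (auto simp: port_def split: if_splits)
  have lmi: "i = i'" if a: "i \<in> {1..n}" "i' \<in> {1..n}" "lm ! (i - 1) = lm ! (i' - 1)" for i i'
  proof -
    have r: "i - 1 < length lm" "i' - 1 < length lm" using a(1,2) nm by auto
    have "i - 1 = i' - 1" using nth_eq_iff_index_eq[OF distinct_leafaddrs r] a(3) by blast
    then show ?thesis using a(1,2) by auto
  qed
  have lpi: "i = i'" if a: "i \<in> {1..n}" "i' \<in> {1..n}" "lp ! (sg i - 1) = lp ! (sg i' - 1)" for i i'
  proof -
    have r: "sg i - 1 < length lp" "sg i' - 1 < length lp" using sg_range[OF a(1)] sg_range[OF a(2)] np by auto
    have "sg i - 1 = sg i' - 1" using nth_eq_iff_index_eq[OF distinct_leafaddrs r] a(3) by blast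
    then have "sg i = sg i'" using sg_range[OF a(1)] sg_range[OF a(2)] by linarith
    then show ?thesis using sg_inj a by blast
  qed
  have injt: "inj_on (sd_tail D0) (sd_edges D0)"
  proof (rule inj_onI)
    fix e1 e2 assume e1: "e1 \<in> sd_edges D0" and e2: "e2 \<in> sd_edges D0" and eq: "sd_tail D0 e1 = sd_tail D0 e2"
    show "e1 = e2" using e1
    proof (cases rule: E0_cases)
      case (EM w) note A = this
      have bw: "butlast w \<notin> set lm" using butlast_nodes[OF A(2,3)] by blast
      show ?thesis using e2
      proof (cases rule: E0_cases)
        case (EM w') then show ?thesis using A eq lastbl portinj by (simp add: D0_simps)
      next
        case (EJ i) then show ?thesis using A eq bw lm_nth[of i] by (auto simp: D0_simps)
      qed (use A eq in \<open>auto simp: D0_simps\<close>)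
    next
      case (EP w) note A = this
      show ?thesis using e2
        by (cases rule: E0_cases) (use A eq in \<open>auto simp: D0_simps\<close>)
    next
      case (EJ i) note A = this
      show ?thesis using e2
      proof (cases rule: E0_cases)
        case (EM w')
        have bw: "butlast w' \<notin> set lm" using butlast_nodes[OF EM(2,3)] by blast
        then show ?thesis using A EM eq lm_nth[of i] by (auto simp: D0_simps)
      next
        case (EJ i')
        have "lm ! (i - 1) = lm ! (i' - 1)" using A(1) EJ(1) eq by (simp add: D0_simps)
        then have "i = i'" using lmi A(2) EJ(2) by blast
        then show ?thesis using A(1) EJ(1) by simp
      qed (use A eq in \<open>auto simp: D0_simps\<close>)
    next
      case ER note A = this
      show ?thesis using e2
        by (cases rule: E0_cases) (use A eq in \<open>auto simp: D0_simps\<close>)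
    qed
  qed
  have injh: "inj_on (sd_head D0) (sd_edges D0)"
  proof (rule inj_onI)
    fix e1 e2 assume e1: "e1 \<in> sd_edges D0" and e2: "e2 \<in> sd_edges D0" and eq: "sd_head D0 e1 = sd_head D0 e2"
    show "e1 = e2" using e1
    proof (cases rule: E0_cases)
      case (EM w) note A = this
      show ?thesis using e2
        by (cases rule: E0_cases) (use A eq in \<open>auto simp: D0_simps\<close>)
    next
      case (EP w) note A = this
      have bw: "butlast w \<notin> set lp" using butlast_nodes[OF A(2,3)] by blast
      show ?thesis using e2
      proof (cases rule: E0_cases)
        case (EP w') then show ?thesis using A eq lastbl portinj by (simp add: D0_simps)
      next
        case (EJ i) then show ?thesis using A eq bw lp_nth[of i] by (auto simp: D0_simps)
      qed (use A eq in \<open>auto simp: D0_simps\<close>)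
    next
      case (EJ i) note A = this
      show ?thesis using e2
      proof (cases rule: E0_cases)
        case (EP w')
        have bw: "butlast w' \<notin> set lp" using butlast_nodes[OF EP(2,3)] by blast
        then show ?thesis using A EP eq lp_nth[of i] by (auto simp: D0_simps)
      next
        case (EJ i')
        have "lp ! (sg i - 1) = lp ! (sg i' - 1)" using A(1) EJ(1) eq by (simp add: D0_simps)
        then have "i = i'" using lpi A(2) EJ(2) by blast
        then show ?thesis using A(1) EJ(1) by simp
      qed (use A eq in \<open>auto simp: D0_simps\<close>)
    next
      case ER note A = this
      show ?thesis using e2
        by (cases rule: E0_cases) (use A eq in \<open>auto simp: D0_simps\<close>)
    qed
  qed
  have out: "\<exists>e\<in>sd_edges D0. fst (sd_tail D0 e) = v" if vV: "v \<in> sd_verts D0" for v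
  proof -
    consider w where "v = VM w" "w \<in> nodes Tm" | w where "v = VP w" "w \<in> nodes Tp"
      using vV by (auto simp: D0_simps)
    then show ?thesis
    proof cases
      case 1
      show ?thesis
      proof (cases "w \<in> set lm")
        case True
        then obtain j where j: "j < n" "lm ! j = w" using nm by (auto simp: in_set_conv_nth)
        then show ?thesis using 1 by (intro bexI[of _ "EJ (Suc j)"]) (auto simp: D0_simps)
      next
        case False
        then have "w @ [False] \<in> nodes Tm" using nodes_snoc 1 by blast
        then show ?thesis using 1 by (intro bexI[of _ "EM (w @ [False])"]) (auto simp: D0_simps)
      qed
    next
      case 2
      show ?thesis
      proof (cases "w = []")
        case True then show ?thesis using 2 by (intro bexI[of _ ER]) (auto simp: D0_simps)
      next
        case False then show ?thesis using 2 by (intro bexI[of _ "EP w"]) (auto simp: D0_simps)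
      qed
    qed
  qed
  show ?thesis unfolding wf_def using fin ne ends ps injt injh out by blast
qed

end

lemma succ_len:
  assumes "successively (\<lambda>x y. f x < (f y :: nat)) xs" "\<forall>x\<in>set xs. f x \<le> B" "xs \<noteq> []"
  shows "length xs + f (hd xs) \<le> B + 1"
  using assms
proof (induction xs)
  case Nil then show ?case by simp
next
  case (Cons x xs)
  show ?case
  proof (cases "xs = []")
    case True then show ?thesis using Cons.prems by simp
  next
    case False
    then have "length xs + f (hd xs) \<le> B + 1" using Cons by (simp add: successively_Cons)
    moreover have "f x < f (hd xs)" using Cons.prems False by (simp add: successively_Cons)
    ultimately show ?thesis by simp
  qed
qed

context setting
begin

definition pos :: "eid \<Rightarrow> real \<Rightarrow> real" where
  "pos e t = (case e of EM w \<Rightarrow> aff (ivf w 0 1) t | EP w \<Rightarrow> aff (ivf w 0 1) t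
     | EJ i \<Rightarrow> aff (ivf (lm ! (i - 1)) 0 1) t | ER \<Rightarrow> t | EF _ \<Rightarrow> 0)"

definition isJ :: "eid \<Rightarrow> bool" where "isJ e = (case e of EJ _ \<Rightarrow> True | _ \<Rightarrow> False)"
definition isP :: "eid \<Rightarrow> bool" where "isP e = (case e of EP _ \<Rightarrow> True | _ \<Rightarrow> False)"
definition HH :: nat where "HH = max (ht Tm) (ht Tp)"
definition rk :: "eid \<Rightarrow> nat" where
  "rk e = (case e of EM w \<Rightarrow> length w | EJ _ \<Rightarrow> HH + 1 | EP w \<Rightarrow> 2 * HH + 2 - length w | _ \<Rightarrow> 0)"

lemma pos_simps[simp]: "pos (EM w) t = aff (ivf w 0 1) t" "pos (EP w) t = aff (ivf w 0 1) t"
  "pos (EJ i) t = aff (ivf (lm ! (i - 1)) 0 1) t" "pos ER t = t"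
  by (simp_all add: pos_def)
lemma isJ_simps[simp]: "isJ (EJ i)" "\<not> isJ (EM w)" "\<not> isJ (EP w)" "\<not> isJ ER"
  by (simp_all add: isJ_def)
lemma isP_simps[simp]: "isP (EP w)" "\<not> isP (EM w)" "\<not> isP (EJ i)" "\<not> isP ER"
  by (simp_all add: isP_def)
lemma rk_simps[simp]: "rk (EM w) = length w" "rk (EJ i) = HH + 1" "rk (EP w) = 2 * HH + 2 - length w" "rk ER = 0"
  by (simp_all add: rk_def)

lemma lenTm: "w \<in> nodes Tm \<Longrightarrow> length w \<le> HH" using nodes_len[of w Tm] unfolding HH_def by simp
lemma lenTp: "w \<in> nodes Tp \<Longrightarrow> length w \<le> HH" using nodes_len[of w Tp] unfolding HH_def by simp

lemma pos_bounds: "e \<in> sd_edges D0 \<Longrightarrow> 0 \<le> t \<Longrightarrow> t < 1 \<Longrightarrow> 0 \<le> pos e t \<and> pos e t < 1"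
  by (erule E0_cases) (auto simp: aff_bounds)

lemma rk_bound: "e \<in> sd_edges D0 \<Longrightarrow> rk e \<le> 2 * HH + 2"
  by (erule E0_cases) (auto dest: lenTm)

lemma blue_le: "sd_blue D0 e \<le> 1"
  by (cases e) (simp_all add: D0_simps init_sd_def Let_def)

lemma blue_nJ: "\<not> isJ e \<Longrightarrow> sd_blue D0 e = 0"
  by (cases e) (simp_all add: D0_simps init_sd_def Let_def)

lemma G_J:
  assumes i: "i \<in> {1..n}" and t: "0 \<le> t" "t < 1"
  shows "G Tm Tp k (aff (ivf (lm ! (i - 1)) 0 1) t) = aff (ivf (lp ! (sg i - 1)) 0 1) t + real (sd_blue D0 (EJ i))"
proof -
  define j where "j = i - 1"
  have j: "j < n" using i unfolding j_def by auto
  have Ij: "I ! j = ivf (lm ! (i - 1)) 0 1" unfolding j_def using j nm by (simp add: leafints_ivf j_def)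
  define s where "s = (j + k) mod n"
  have s: "s = sg i - 1" "s < n" using sg_range[OF i] kn unfolding s_def j_def by auto
  have Js: "J ! s = ivf (lp ! (sg i - 1)) 0 1" using s np by (simp add: leafints_ivf)
  have lb: "fst (I ! j) < snd (I ! j)" using LI_bounds[of j Tm] j nm by simp
  define y where "y = aff (I ! j) t"
  have y1: "fst (I ! j) \<le> y" "y < snd (I ! j)" unfolding y_def aff_def using lb t
    by (auto intro!: mult_nonneg_nonneg) (smt (verit) mult_less_cancel_right2)
  have "G Tm Tp k y = Gv Tm Tp k j y" using G_Gv[of j Tm y Tp k] j nm y1 by simp
  also have "\<dots> = fst (J ! s) + t * (snd (J ! s) - fst (J ! s)) + (if n < j + 1 + k then 1 else 0)"
    unfolding Gv_def Let_def nm s_def[symmetric] y_def aff_def using lb by simp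
  also have "\<dots> = aff (ivf (lp ! (sg i - 1)) 0 1) t + real (sd_blue D0 (EJ i))"
    unfolding Js[symmetric] aff_def using i j_def by (simp add: D0_simps)
  finally show ?thesis unfolding y_def Ij .
qed

lemma st0:
  assumes st: "stp D0 e t e' t'" and t: "0 \<le> t" "t < 1"
  shows "(isJ e \<longrightarrow> (isP e' \<or> e' = ER) \<and> pos e' t' + real (sd_blue D0 e) = G Tm Tp k (pos e t))
       \<and> (\<not> isJ e \<longrightarrow> pos e' t' = pos e t \<and> (isP e \<longrightarrow> isP e' \<or> e' = ER) \<and> (\<not> isP e \<longrightarrow> \<not> isP e' \<and> e' \<noteq> ER))
       \<and> (e \<noteq> ER \<and> e' \<noteq> ER \<longrightarrow> rk e < rk e')"
proof -
  have eE: "e \<in> sd_edges D0" and e'E: "e' \<in> sd_edges D0"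
    and hv: "fst (sd_head D0 e) = fst (sd_tail D0 e')"
    and kP: "sd_kind D0 (fst (sd_head D0 e)) = Pass \<Longrightarrow> t' = t"
    and kM: "sd_kind D0 (fst (sd_head D0 e)) = Merge \<Longrightarrow> t' = (t + real (snd (sd_head D0 e))) / 2"
    and kS: "sd_kind D0 (fst (sd_head D0 e)) = Split \<Longrightarrow> t = (t' + real (snd (sd_tail D0 e'))) / 2"
    using st unfolding stp_def by auto
  show ?thesis using eE
  proof (cases rule: E0_cases)
    case (EM w) note A = this
    show ?thesis using e'E
    proof (cases rule: E0_cases)
      case (EM w')
      have bw: "butlast w' = w" using hv A EM by (simp add: D0_simps)
      have ww: "w' = w @ [last w']" using bw EM(3) by (metis append_butlast_last_id)
      have nl: "w \<notin> set lm" using snoc_nodes[of w "last w'" Tm] ww EM(2) by simp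
      have tt: "t = (t' + (if last w' then 1 else 0)) / 2" using kS A EM nl by (simp add: D0_simps port_real)
      have "pos e' t' = aff (ivf w 0 1) t" unfolding tt using A EM ww aff_snoc[of w "last w'" 0 1 t'] by simp
      then have "pos e' t' = pos e t" using A by simp
      moreover have "length w' = Suc (length w)" using arg_cong[OF ww, of length] by simp
      then have "rk e < rk e'" using A EM by simp
      ultimately show ?thesis using A EM by simp
    next
      case (EJ i)
      have wl: "lm ! (i - 1) = w" using hv A EJ by (simp add: D0_simps)
      have "w \<in> set lm" using wl lm_nth[OF EJ(2)] by simp
      then have "t' = t" using kP A by (simp add: D0_simps)
      moreover have "rk e < rk e'" using A EJ lenTm[OF A(2)] by simp
      ultimately show ?thesis using A EJ wl by simp
    qed (use hv A in \<open>simp_all add: D0_simps\<close>)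
  next
    case (EP w) note A = this
    have bw: "butlast w \<in> nodes Tp" "butlast w \<notin> set lp" using butlast_nodes[OF A(2,3)] by auto
    have ww: "w = butlast w @ [last w]" using A(3) by simp
    have tt: "t' = (t + (if last w then 1 else 0)) / 2" using kM A bw by (simp add: D0_simps port_real)
    have pe: "pos e t = aff (ivf (butlast w) 0 1) t'"
      unfolding tt using A aff_snoc[of "butlast w" "last w" 0 1 t] ww by simp
    show ?thesis using e'E
    proof (cases rule: E0_cases)
      case (EP w')
      have "w' = butlast w" using hv A EP by (simp add: D0_simps)
      moreover have "length w \<le> HH" using lenTp[OF A(2)] .
      ultimately show ?thesis using A EP pe by (cases w rule: rev_cases) auto
    next
      case ER
      have "butlast w = []" using hv A ER by (simp add: D0_simps)
      then show ?thesis using A ER pe by (simp add: aff_def)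
    qed (use hv A in \<open>simp_all add: D0_simps\<close>)
  next
    case (EJ i) note A = this
    define u where "u = lp ! (sg i - 1)"
    have u: "u \<in> set lp" "u \<in> nodes Tp" using lp_nth[OF A(2)] unfolding u_def by auto
    have hu: "fst (sd_head D0 e) = VP u" using A unfolding u_def by (simp add: D0_simps)
    have tt: "t' = t" using kP hu u by (simp add: D0_simps)
    have g: "G Tm Tp k (pos e t) = aff (ivf u 0 1) t + real (sd_blue D0 e)"
      using G_J[OF A(2) t] A unfolding u_def by simp
    show ?thesis using e'E
    proof (cases rule: E0_cases)
      case (EP w')
      have "w' = u" using hv hu EP by (simp add: D0_simps)
      moreover have "length u \<le> HH" using lenTp[OF u(2)] .
      ultimately show ?thesis using A EP g tt by simp
    next
      case ER
      have "u = []" using hv hu ER by (simp add: D0_simps)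
      then show ?thesis using A ER g tt by (simp add: aff_def)
    qed (use hv hu in \<open>simp_all add: D0_simps\<close>)
  next
    case ER note A = this
    show ?thesis using e'E
    proof (cases rule: E0_cases)
      case (EM w')
      have bw: "butlast w' = []" using hv A EM by (simp add: D0_simps)
      have ww: "w' = [] @ [last w']" using bw EM(3) by (metis append_butlast_last_id)
      have nl: "[] \<notin> set lm" using snoc_nodes[of "[]" "last w'" Tm] ww EM(2) by simp
      have tt: "t = (t' + (if last w' then 1 else 0)) / 2" using kS A EM nl by (simp add: D0_simps port_real)
      have "pos e' t' = aff (ivf [] 0 1) t" unfolding tt using A EM ww aff_snoc[of "[]" "last w'" 0 1 t'] by simp
      then have "pos e' t' = pos e t" using A aff_nil by simp
      then show ?thesis using A EM by simp
    next
      case (EJ i)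
      have wl: "lm ! (i - 1) = []" using hv A EJ by (simp add: D0_simps)
      have "[] \<in> set lm" using wl lm_nth[OF EJ(2)] by simp
      then have "t' = t" using kP A by (simp add: D0_simps)
      then show ?thesis using A EJ wl by (simp add: aff_def)
    qed (use hv A in \<open>simp_all add: D0_simps\<close>)
  qed
qed

end

context setting
begin

definition cJ :: "(eid \<times> real) list \<Rightarrow> nat" where
  "cJ ss = length (filter (\<lambda>p. isJ (fst p)) (butlast ss))"
definition ph :: "eid \<Rightarrow> int" where "ph e = (if isP e then 0 else -1)"

lemma traj_snoc: "traj D xs' \<Longrightarrow> xs' = xs @ [q] \<Longrightarrow> xs \<noteq> [] \<Longrightarrow> traj D xs \<and> stq D (last xs) q
   \<and> fst q \<in> sd_edges D \<and> 0 \<le> snd q \<and> snd q < 1"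
  unfolding traj_def by (auto simp: successively_append_iff)

lemma traj_last: "traj D ss \<Longrightarrow> fst (last ss) \<in> sd_edges D \<and> 0 \<le> snd (last ss) \<and> snd (last ss) < 1"
  unfolding traj_def by auto

lemma rs0_snoc: "rs D0 (xs @ [q]) = rs D0 xs + (if fst q = ER then 1 else 0)"
  by (simp add: rs_def D0_simps)
lemma bs_snoc: "bs D (xs @ [q]) = bs D xs + sd_blue D (fst q)"
  by (simp add: bs_def)

lemma filt_last: "ys \<noteq> [] \<Longrightarrow> length (filter P ys) = length (filter P (butlast ys)) + (if P (last ys) then 1 else 0)"
  by (induction ys rule: rev_induct) auto

lemma bs_last: "ys \<noteq> [] \<Longrightarrow> bs D ys = bs D (butlast ys) + sd_blue D (fst (last ys))"
  by (induction ys rule: rev_induct) (auto simp: bs_def)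

lemma isJ_nP: "isJ e \<Longrightarrow> \<not> isP e" by (cases e) (simp_all add: isJ_def isP_def)

lemma gl_G: "0 \<le> y \<Longrightarrow> y < 1 \<Longrightarrow> gl y = G Tm Tp k y"
  unfolding glift_G by (simp add: frac_eq floor_eq_iff)

lemma claim:
  "traj D0 ss \<Longrightarrow> \<exists>y0. 0 \<le> y0 \<and> y0 < 1
     \<and> (gl ^^ cJ ss) y0 = pos (fst (last ss)) (snd (last ss)) + real (bs D0 (butlast ss))
     \<and> int (cJ ss) - int (rs D0 ss) - ph (fst (last ss)) \<in> {0, 1}"
proof (induction ss rule: rev_induct)
  case Nil then show ?case by (simp add: traj_def)
next
  case (snoc q xs)
  show ?case
  proof (cases "xs = []")
    case True
    have q: "fst q \<in> sd_edges D0" "0 \<le> snd q" "snd q < 1" using snoc.prems True unfolding traj_def by auto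
    show ?thesis using True pos_bounds[OF q] q(1)
      by (intro exI[of _ "pos (fst q) (snd q)"]) (auto simp: cJ_def rs_def bs_def ph_def D0_simps elim!: E0_cases)
  next
    case False
    note ts = traj_snoc[OF snoc.prems refl False]
    obtain y0 where y0: "0 \<le> y0" "y0 < 1"
      "(gl ^^ cJ xs) y0 = pos (fst (last xs)) (snd (last xs)) + real (bs D0 (butlast xs))"
      "int (cJ xs) - int (rs D0 xs) - ph (fst (last xs)) \<in> {0, 1}"
      using snoc.IH ts by blast
    define p where "p = last xs"
    have xs: "xs = butlast xs @ [p]" using False unfolding p_def by simp
    have pl: "fst p \<in> sd_edges D0" "0 \<le> snd p" "snd p < 1" using traj_last[of D0 xs] ts unfolding p_def by auto
    have stpq: "stp D0 (fst p) (snd p) (fst q) (snd q)" using ts unfolding p_def by simp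
    note S = st0[OF stpq pl(2,3)]
    have cJ': "cJ (xs @ [q]) = cJ xs + (if isJ (fst p) then 1 else 0)"
      unfolding cJ_def using filt_last[OF False, of "\<lambda>p. isJ (fst p)"] p_def by simp
    have bs': "bs D0 (butlast (xs @ [q])) = bs D0 (butlast xs) + sd_blue D0 (fst p)"
      using bs_last[OF False, of D0] p_def by simp
    have pb: "0 \<le> pos (fst p) (snd p)" "pos (fst p) (snd p) < 1" using pos_bounds[OF pl] by auto
    show ?thesis
    proof (cases "isJ (fst p)")
      case True
      have "(gl ^^ cJ (xs @ [q])) y0 = gl ((gl ^^ cJ xs) y0)" using cJ' True by simp
      also have "\<dots> = gl (pos (fst p) (snd p)) + real (bs D0 (butlast xs))"
        unfolding y0(3) p_def[symmetric] by (rule gl_shift_nat)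
      also have "\<dots> = pos (fst q) (snd q) + real (sd_blue D0 (fst p)) + real (bs D0 (butlast xs))"
        using gl_G[OF pb] S True by simp
      finally have v: "(gl ^^ cJ (xs @ [q])) y0 = pos (fst (last (xs @ [q]))) (snd (last (xs @ [q]))) + real (bs D0 (butlast (xs @ [q])))"
        using bs' by simp
      have "int (cJ (xs @ [q])) - int (rs D0 (xs @ [q])) - ph (fst (last (xs @ [q])))
            = int (cJ xs) - int (rs D0 xs) - ph (fst p)"
        using S True cJ' y0(4) isJ_nP[OF True] by (auto simp: rs0_snoc ph_def p_def)
      then show ?thesis using v y0 p_def by (intro exI[of _ y0]) auto
    next
      case False
      have b0: "sd_blue D0 (fst p) = 0" using blue_nJ False by blast
      have v: "(gl ^^ cJ (xs @ [q])) y0 = pos (fst (last (xs @ [q]))) (snd (last (xs @ [q]))) + real (bs D0 (butlast (xs @ [q])))"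
        using y0(3) cJ' False S bs' b0 p_def by simp
      have "int (cJ (xs @ [q])) - int (rs D0 (xs @ [q])) - ph (fst (last (xs @ [q])))
            = int (cJ xs) - int (rs D0 xs) - ph (fst p)"
        using S False cJ' by (auto simp: rs0_snoc ph_def)
      then show ?thesis using v y0 p_def by (intro exI[of _ y0]) auto
    qed
  qed
qed

lemma glp_diff: "\<bar>(gl ^^ a) y - (gl ^^ b) y\<bar> \<le> 2 * \<bar>real a - real b\<bar>"
proof (cases "b \<le> a")
  case True
  have "(gl ^^ a) y = (gl ^^ (a - b)) ((gl ^^ b) y)" using True by (metis funpow_add le_add_diff_inverse2 o_apply)
  then show ?thesis using glp_disp[of "a - b" "(gl ^^ b) y"] True by (simp add: of_nat_diff)
next
  case False
  have "(gl ^^ b) y = (gl ^^ (b - a)) ((gl ^^ a) y)" using False by (metis funpow_add le_add_diff_inverse2 o_apply nat_le_linear)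
  then show ?thesis using glp_disp[of "b - a" "(gl ^^ a) y"] False by (simp add: of_nat_diff abs_minus_commute)
qed

lemma inv1_0: "inv1 gl D0"
  unfolding inv1_def
proof (intro allI impI)
  fix ss assume tr: "traj D0 ss"
  obtain y0 where y0: "0 \<le> y0" "y0 < 1"
    "(gl ^^ cJ ss) y0 = pos (fst (last ss)) (snd (last ss)) + real (bs D0 (butlast ss))"
    "int (cJ ss) - int (rs D0 ss) - ph (fst (last ss)) \<in> {0, 1}"
    using claim[OF tr] by blast
  have ne: "ss \<noteq> []" using tr unfolding traj_def by simp
  have bsl: "bs D0 ss = bs D0 (butlast ss) + sd_blue D0 (fst (last ss))"
    using bs_snoc[of D0 "butlast ss" "last ss"] ne by simp
  have pb: "0 \<le> pos (fst (last ss)) (snd (last ss))" "pos (fst (last ss)) (snd (last ss)) < 1"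
    using pos_bounds traj_last[OF tr] by auto
  have bl: "sd_blue D0 (fst (last ss)) \<le> 1" by (rule blue_le)
  have e1: "\<bar>(gl ^^ cJ ss) y0 - real (bs D0 ss)\<bar> \<le> 1"
    using y0(3) bsl pb bl by (simp add: abs_le_iff)
  have "\<bar>int (cJ ss) - int (rs D0 ss)\<bar> \<le> 1" using y0(4) by (auto simp: ph_def split: if_splits)
  then have h: "\<bar>real (rs D0 ss) - real (cJ ss)\<bar> \<le> 1" by linarith
  have e2: "\<bar>(gl ^^ rs D0 ss) y0 - (gl ^^ cJ ss) y0\<bar> \<le> 2"
  proof -
    have "\<bar>(gl ^^ rs D0 ss) y0 - (gl ^^ cJ ss) y0\<bar> \<le> 2 * \<bar>real (rs D0 ss) - real (cJ ss)\<bar>" by (rule glp_diff)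
    also have "\<dots> \<le> 2" using h by simp
    finally show ?thesis .
  qed
  have e3: "\<bar>(gl ^^ rs D0 ss) y0 - (gl ^^ rs D0 ss) 0\<bar> \<le> 1" using glp_unit y0 by simp
  show "\<bar>(gl ^^ rs D0 ss) 0 - real (bs D0 ss)\<bar> \<le> 4" using e1 e2 e3 by linarith
qed

lemma inv2_0: "inv2 D0"
  unfolding inv2_def
proof (intro exI[of _ "2 * HH + 3"] allI impI)
  fix ss assume tr: "traj D0 ss" and r0: "rs D0 ss = 0"
  have nER: "\<forall>p\<in>set ss. fst p \<noteq> ER" using r0 unfolding rs_def by (auto simp: D0_simps sum_list_eq_0_iff)
  have st: "successively (stq D0) ss" and ne: "ss \<noteq> []"
    and sts: "\<forall>p\<in>set ss. fst p \<in> sd_edges D0 \<and> 0 \<le> snd p \<and> snd p < 1" using tr unfolding traj_def by auto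
  have "successively (\<lambda>p q. rk (fst p) < rk (fst q)) ss"
  proof (rule successively_mono[OF st])
    fix p q assume "p \<in> set ss" "q \<in> set ss" "stq D0 p q"
    then show "rk (fst p) < rk (fst q)" using st0[of "fst p" "snd p" "fst q" "snd q"] nER sts by auto
  qed
  moreover have "\<forall>p\<in>set ss. rk (fst p) \<le> 2 * HH + 2" using sts rk_bound by blast
  ultimately have "length ss + rk (fst (hd ss)) \<le> 2 * HH + 2 + 1"
    using succ_len[of "\<lambda>p. rk (fst p)" ss "2 * HH + 2"] ne by blast
  then show "length ss \<le> 2 * HH + 3" by simp
qed

end

theorem mainTheorem4:
  fixes Tm Tp :: tree and n k :: nat and D :: sd
  assumes "nleaves Tm = n" and "nleaves Tp = n" and "k < n"
    and "ruleI\<^sup>*\<^sup>* (init_sd Tm Tp k) D"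
    and "\<not> (\<exists>es. ms_strand D es)"
  shows "(\<exists>cs. is_cycle D cs)
       \<and> (\<forall>cs. is_cycle D cs \<longrightarrow>
              cycle_red D cs \<ge> 1
            \<and> rot_number (glift Tm Tp k) = frac (real (cycle_blue D cs) / real (cycle_red D cs)))"
proof -
  interpret setting Tm Tp n k using assms(1-3) by unfold_locales
  have W: "wf D \<and> inv1 gl D \<and> inv2 D"
    using reach_pres[OF assms(4) wf0 inv1_0 inv2_0] .
  have ex: "\<exists>cs. is_cycle D cs" using cycle_exists W by blast
  have all: "cycle_red D cs \<ge> 1
            \<and> rot_number (glift Tm Tp k) = frac (real (cycle_blue D cs) / real (cycle_red D cs))"
    if cyc: "is_cycle D cs" for cs
  proof -
    interpret cyc D cs using W cyc assms(5) by unfold_locales auto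
    have r: "1 \<le> cycle_red D cs" using red_pos W by blast
    have "(\<lambda>N. (gl ^^ N) 0 / real N) \<longlonglongrightarrow> real (cycle_blue D cs) / real (cycle_red D cs)"
      using rot[of gl] W glp_disp by blast
    then have "lim (\<lambda>N. (gl ^^ N) 0 / real N) = real (cycle_blue D cs) / real (cycle_red D cs)"
      by (rule limI)
    then show ?thesis using r unfolding rot_number_def by simp
  qed
  show ?thesis using ex all by blast
qed

end
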